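(* Let $f:\mathbb{R}\to\mathbb{R}$ be a Schwartz function and $\sigma>0$. Then for all $|\phi|<1$ and $t\in\mathbb{R}$, \[|f_\phi(t)-f(t)|\ll_\sigma\frac{|\phi|}{1+|t|^\sigma}.\]
   Context: $e(x)=e^{2\pi ix}$. For $\phi\in\mathbb{R}$: $f_\phi=f$ if $\phi\equiv0\bmod 2\pi$; otherwise for $\phi\notin\pi\mathbb{Z}$, $f_\phi(w)=e(-\sigma_\phi/8)|\sin\phi|^{-1/2}\int_\mathbb{R}e\big(\frac{\frac12(w^2+w'^2)\cos\phi-ww'}{\sin\phi}\big)f(w')dw'$, where $\sigma_\phi=2\nu+1$ for $\nu\pi<\phi<(\nu+1)\pi$, $\nu\in\mathbb{Z}$. The implied constant depends on $f$ and $\sigma$. *)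

theory Defs
  imports "HOL-Analysis.Analysis"
begin

definition e2pi :: "real \<Rightarrow> complex" where
  "e2pi x = exp (2 * pi * \<i> * complex_of_real x)"

definition schwartz :: "(real \<Rightarrow> real) \<Rightarrow> bool" where
  "schwartz f \<longleftrightarrow>
     (\<forall>n x. ((deriv ^^ n) f has_real_derivative (deriv ^^ Suc n) f x) (at x)) \<and>
     (\<forall>m n. \<exists>C. \<forall>x. \<bar>x ^ m * (deriv ^^ n) f x\<bar> \<le> C)"

definition sigma_phase :: "real \<Rightarrow> real" where
  "sigma_phase \<phi> = 2 * of_int \<lfloor>\<phi> / pi\<rfloor> + 1"

text \<open>Fractional Fourier transform f_phi. For phi an odd multiple of pi (not
  specified in the paper, irrelevant for |phi|<1) we use the standard value f(-w).\<close>
definition frft :: "(real \<Rightarrow> real) \<Rightarrow> real \<Rightarrow> real \<Rightarrow> complex" where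
  "frft f \<phi> w =
    (if \<exists>k::int. \<phi> = 2 * pi * of_int k then complex_of_real (f w)
     else if \<exists>k::int. \<phi> = pi * of_int k then complex_of_real (f (- w))
     else e2pi (- sigma_phase \<phi> / 8) * complex_of_real (\<bar>sin \<phi>\<bar> powr (-1/2)) *
       (LINT w'|lborel. e2pi (((1/2) * (w\<^sup>2 + w'\<^sup>2) * cos \<phi> - w * w') / sin \<phi>)
                         * complex_of_real (f w')))"

end

theory Submission
  imports Defs "HOL-Probability.Probability"
begin


lemma sch_der: "schwartz g \<Longrightarrow> ((deriv ^^ n) g has_real_derivative (deriv ^^ Suc n) g x) (at x)"
  unfolding schwartz_def by blast

lemma sch_bnd: "schwartz g \<Longrightarrow> \<exists>C. \<forall>x. \<bar>x ^ m * (deriv ^^ n) g x\<bar> \<le> C"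
  unfolding schwartz_def by blast

lemma sch_cont: "schwartz g \<Longrightarrow> continuous_on UNIV ((deriv ^^ n) g)"
  by (meson DERIV_isCont continuous_at_imp_continuous_on sch_der)

lemma sch_isCont: "schwartz g \<Longrightarrow> isCont ((deriv ^^ n) g) x"
  by (meson DERIV_isCont sch_der)

lemma sch_meas: "schwartz g \<Longrightarrow> (deriv ^^ n) g \<in> borel_measurable borel"
  by (simp add: borel_measurable_continuous_onI sch_cont)

lemma sch_deriv: "schwartz g \<Longrightarrow> schwartz (deriv g)"
  unfolding schwartz_def
  by (metis comp_apply funpow_Suc_right)

lemma funpow_deriv_Suc: "(deriv ^^ n) (deriv g) = (deriv ^^ Suc n) g"
  by (metis comp_apply funpow_Suc_right)

lemma sch_derivs: "schwartz g \<Longrightarrow> schwartz ((deriv ^^ n) g)"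
  by (induction n) (auto simp: sch_deriv)

lemma sch_mult_x_derivs:
  assumes "schwartz g"
  shows "(deriv ^^ n) (\<lambda>w. w * g w) = (\<lambda>w. w * (deriv ^^ n) g w + of_nat n * (deriv ^^ (n - 1)) g w)"
proof (induction n)
  case 0 then show ?case by simp
next
  case (Suc n)
  have "deriv (\<lambda>w. w * (deriv ^^ n) g w + of_nat n * (deriv ^^ (n - 1)) g w) x
        = x * (deriv ^^ Suc n) g x + of_nat (Suc n) * (deriv ^^ (Suc n - 1)) g x" for x
  proof (cases n)
    case 0
    show ?thesis
      apply (rule DERIV_imp_deriv)
      using 0 sch_der[OF assms, of 0 x]
      by (auto intro!: derivative_eq_intros)
  next
    case (Suc m)
    show ?thesis
      apply (rule DERIV_imp_deriv)
      using Suc sch_der[OF assms, of n x] sch_der[OF assms, of m x]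
      by (auto intro!: derivative_eq_intros simp: algebra_simps)
  qed
  note hd = this
  show ?case unfolding funpow.simps(2) o_apply Suc.IH using hd by (auto simp: fun_eq_iff)
qed

lemma sch_mult_x: assumes "schwartz g" shows "schwartz (\<lambda>w. w * g w)"
proof -
  have d: "(deriv ^^ n) (\<lambda>w. w * g w) = (\<lambda>w. w * (deriv ^^ n) g w + of_nat n * (deriv ^^ (n - 1)) g w)" for n
    by (rule sch_mult_x_derivs[OF assms])
  show ?thesis unfolding schwartz_def
  proof safe
    fix n x
    show "((deriv ^^ n) (\<lambda>w. w * g w) has_real_derivative (deriv ^^ Suc n) (\<lambda>w. w * g w) x) (at x)"
    proof (cases n)
      case 0
      then show ?thesis unfolding d using sch_der[OF assms, of 0 x]
        by (auto intro!: derivative_eq_intros)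
    next
      case (Suc m)
      then show ?thesis unfolding d using sch_der[OF assms, of n x] sch_der[OF assms, of m x]
        by (auto intro!: derivative_eq_intros simp: algebra_simps)
    qed
  next
    fix m n
    obtain C1 where C1: "\<forall>x. \<bar>x ^ Suc m * (deriv ^^ n) g x\<bar> \<le> C1" using sch_bnd[OF assms] by blast
    obtain C2 where C2: "\<forall>x. \<bar>x ^ m * (deriv ^^ (n-1)) g x\<bar> \<le> C2" using sch_bnd[OF assms] by blast
    show "\<exists>C. \<forall>x. \<bar>x ^ m * (deriv ^^ n) (\<lambda>w. w * g w) x\<bar> \<le> C"
    proof (intro exI allI)
      fix x
      have "\<bar>x ^ m * (deriv ^^ n) (\<lambda>w. w * g w) x\<bar>
          = \<bar>x ^ Suc m * (deriv ^^ n) g x + of_nat n * (x ^ m * (deriv ^^ (n-1)) g x)\<bar>"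
        unfolding d by (simp add: algebra_simps)
      also have "\<dots> \<le> \<bar>x ^ Suc m * (deriv ^^ n) g x\<bar> + of_nat n * \<bar>x ^ m * (deriv ^^ (n-1)) g x\<bar>"
        by (metis abs_mult abs_of_nat abs_triangle_ineq)
      also have "\<dots> \<le> C1 + of_nat n * C2"
        using C1 C2 by (intro add_mono mult_left_mono) auto
      finally show "\<bar>x ^ m * (deriv ^^ n) (\<lambda>w. w * g w) x\<bar> \<le> C1 + of_nat n * C2" .
    qed
  qed
qed

lemma integrable_inv_sq: "integrable lborel (\<lambda>x::real. inverse (1 + x\<^sup>2))"
  using integrable_inverse_1_plus_square by (simp add: set_integrable_def)

lemma sch_integrable:
  assumes "schwartz g"
  shows "integrable lborel (\<lambda>x. x ^ m * (deriv ^^ n) g x)"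
proof -
  obtain C1 where C1: "\<forall>x. \<bar>x ^ m * (deriv ^^ n) g x\<bar> \<le> C1" using sch_bnd[OF assms] by blast
  obtain C2 where C2: "\<forall>x. \<bar>x ^ (m+2) * (deriv ^^ n) g x\<bar> \<le> C2" using sch_bnd[OF assms] by blast
  show ?thesis
  proof (rule Bochner_Integration.integrable_bound)
    show "integrable lborel (\<lambda>x. (C1 + C2) * inverse (1 + x\<^sup>2))"
      using integrable_inv_sq by simp
    show "(\<lambda>x. x ^ m * (deriv ^^ n) g x) \<in> borel_measurable lborel"
      using sch_meas[OF assms, of n] by measurable
    show "AE x in lborel. norm (x ^ m * (deriv ^^ n) g x) \<le> norm ((C1 + C2) * inverse (1 + x\<^sup>2))"
    proof (intro AE_I2)
      fix x :: real
      have p: "0 < 1 + x\<^sup>2" by (simp add: add_pos_nonneg)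
      have "(1 + x\<^sup>2) * \<bar>x ^ m * (deriv ^^ n) g x\<bar> = \<bar>x ^ m * (deriv ^^ n) g x\<bar> + \<bar>x ^ (m+2) * (deriv ^^ n) g x\<bar>"
        by (simp add: algebra_simps abs_mult power_add power2_eq_square)
      also have "\<dots> \<le> C1 + C2" using C1 C2 by (intro add_mono) auto
      finally have "\<bar>x ^ m * (deriv ^^ n) g x\<bar> \<le> (C1 + C2) * inverse (1 + x\<^sup>2)"
        using p by (simp add: field_simps)
      then show "norm (x ^ m * (deriv ^^ n) g x) \<le> norm ((C1 + C2) * inverse (1 + x\<^sup>2))"
        by simp
    qed
  qed
qed

lemma sch_integrable0: "schwartz g \<Longrightarrow> integrable lborel g"
  using sch_integrable[of g 0 0] by simp

lemma sch_integrable_abs: "schwartz g \<Longrightarrow> integrable lborel (\<lambda>x. \<bar>x\<bar> ^ m * \<bar>(deriv ^^ n) g x\<bar>)"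
  using integrable_abs[OF sch_integrable[of g m n]] by (simp add: abs_mult power_abs)

lemma sch_lim_top: assumes "schwartz g" shows "((deriv ^^ n) g \<longlongrightarrow> 0) at_top"
proof -
  obtain C where C: "\<forall>x. \<bar>x ^ 1 * (deriv ^^ n) g x\<bar> \<le> C" using sch_bnd[OF assms] by blast
  show ?thesis
  proof (rule tendsto_sandwich[where f="\<lambda>x. - C / x" and h="\<lambda>x. C / x"])
    show "\<forall>\<^sub>F x in at_top. - C / x \<le> (deriv ^^ n) g x"
      using eventually_gt_at_top[of 0]
    proof eventually_elim
      case (elim x) then show ?case using C[rule_format, of x] by (simp add: field_simps abs_le_iff)
    qed
    show "\<forall>\<^sub>F x in at_top. (deriv ^^ n) g x \<le> C / x"
      using eventually_gt_at_top[of 0]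
    proof eventually_elim
      case (elim x) then show ?case using C[rule_format, of x] by (simp add: field_simps abs_le_iff)
    qed
  qed (real_asymp)+
qed

lemma sch_lim_bot: assumes "schwartz g" shows "((deriv ^^ n) g \<longlongrightarrow> 0) at_bot"
proof -
  obtain C where C: "\<forall>x. \<bar>x ^ 1 * (deriv ^^ n) g x\<bar> \<le> C" using sch_bnd[OF assms] by blast
  show ?thesis
  proof (rule tendsto_sandwich[where f="\<lambda>x. C / x" and h="\<lambda>x. - C / x"])
    show "\<forall>\<^sub>F x in at_bot. C / x \<le> (deriv ^^ n) g x"
      using eventually_le_at_bot[of "-1"]
    proof eventually_elim
      case (elim x) then show ?case using C[rule_format, of x] by (simp add: field_simps abs_le_iff)
    qed
    show "\<forall>\<^sub>F x in at_bot. (deriv ^^ n) g x \<le> - C / x"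
      using eventually_le_at_bot[of "-1"]
    proof eventually_elim
      case (elim x) then show ?case using C[rule_format, of x] by (simp add: field_simps abs_le_iff)
    qed
  qed (real_asymp)+
qed


definition Kn :: "complex \<Rightarrow> real \<Rightarrow> real \<Rightarrow> complex" where
  "Kn s x w = s powr (-1/2) * exp (- of_real pi * (of_real (w - x))\<^sup>2 / s)"

definition Hs :: "complex \<Rightarrow> (real \<Rightarrow> real) \<Rightarrow> real \<Rightarrow> complex" where
  "Hs s g x = (LINT w|lborel. Kn s x w * of_real (g w))"

lemma Kn_norm:
  assumes "0 \<le> Re s" "s \<noteq> 0"
  shows "cmod (Kn s x w) \<le> cmod s powr (-1/2)"
proof -
  have "cmod (s powr (-1/2)) = cmod s powr (-1/2)"
    by (subst norm_powr_real_powr') auto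
  moreover have "cmod (exp (- of_real pi * (of_real (w - x))\<^sup>2 / s)) \<le> 1"
  proof -
    have e: "- of_real pi * (of_real (w - x))\<^sup>2 / s = of_real (- pi * (w - x)\<^sup>2) / s" by simp
    have "Re (- of_real pi * (of_real (w - x))\<^sup>2 / s) = - pi * (w - x)\<^sup>2 * Re s / ((Re s)\<^sup>2 + (Im s)\<^sup>2)"
      unfolding e by (simp add: Re_divide)
    also have "\<dots> \<le> 0" using assms by (simp add: divide_nonpos_nonneg mult_nonneg_nonneg)
    finally show ?thesis by (simp add: norm_exp_eq_Re)
  qed
  ultimately show ?thesis unfolding Kn_def norm_mult
    by (metis mult.right_neutral mult_left_mono norm_ge_zero)
qed

lemma Kn_cont: "continuous_on UNIV (Kn s x)"
proof (cases "s = 0")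
  case True then show ?thesis by (simp add: Kn_def)
next
  case False then show ?thesis unfolding Kn_def by (intro continuous_intros) auto
qed

lemma Kn_meas[measurable]: "Kn s x \<in> borel_measurable borel"
  by (rule borel_measurable_continuous_onI[OF Kn_cont])

lemma Kn_vderiv:
  assumes "s \<noteq> 0"
  shows "(Kn s x has_vector_derivative (- 2 * of_real pi * of_real (w - x) / s * Kn s x w)) (at w within S)"
proof -
  have "((\<lambda>z. s powr (-1/2) * exp (- of_real pi * (z - of_real x)\<^sup>2 / s)) has_field_derivative
        (- 2 * of_real pi * (of_real w - of_real x) / s * (s powr (-1/2) * exp (- of_real pi * (of_real w - of_real x)\<^sup>2 / s))))
        (at (of_real w))"
    using assms by (auto intro!: derivative_eq_intros simp: field_simps power2_eq_square)
  from has_vector_derivative_real_field[OF this, of S]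
  show ?thesis unfolding Kn_def by (simp add: algebra_simps)
qed

lemma int_Kp:
  assumes "0 \<le> Re s" "s \<noteq> 0" "integrable lborel p"
  shows "integrable lborel (\<lambda>w. Kn s x w * of_real (p w))"
proof (rule Bochner_Integration.integrable_bound)
  show "integrable lborel (\<lambda>w. cmod s powr (-1/2) * \<bar>p w\<bar>)"
    using assms(3) by (intro integrable_mult_right integrable_abs)
  have "p \<in> borel_measurable borel" using assms(3) by auto
  then show "(\<lambda>w. Kn s x w * of_real (p w)) \<in> borel_measurable lborel" by measurable
  show "AE w in lborel. norm (Kn s x w * of_real (p w)) \<le> norm (cmod s powr (-1/2) * \<bar>p w\<bar>)"
    using Kn_norm[OF assms(1,2)] by (auto simp: norm_mult intro!: mult_right_mono)
qed

lemma Hs_bound: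
  assumes "0 \<le> Re s" "s \<noteq> 0" "integrable lborel p"
  shows "cmod (Hs s p x) \<le> cmod s powr (-1/2) * (LINT w|lborel. \<bar>p w\<bar>)"
proof -
  have "cmod (Hs s p x) \<le> (LINT w|lborel. cmod (Kn s x w * of_real (p w)))"
    unfolding Hs_def by (rule integral_norm_bound)
  also have "\<dots> \<le> (LINT w|lborel. cmod s powr (-1/2) * \<bar>p w\<bar>)"
    using Kn_norm[OF assms(1,2)] assms
    by (intro integral_mono int_Kp integrable_norm integrable_mult_right integrable_abs)
       (auto simp: norm_mult intro!: mult_right_mono)
  finally show ?thesis by simp
qed

lemma FTC_R:
  fixes F f :: "real \<Rightarrow> complex"
  assumes der: "\<And>x. (F has_vector_derivative f x) (at x)"
    and cont: "continuous_on UNIV f" and int: "integrable lborel f"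
    and top: "(F \<longlongrightarrow> 0) at_top" and bot: "(F \<longlongrightarrow> 0) at_bot"
  shows "(LINT x|lborel. f x) = 0"
proof -
  have I: "(LINT x|lborel. indicator {- real n .. real n} x *\<^sub>R f x) = F (real n) - F (- real n)" for n
    by (rule integral_FTC_atLeastAtMost) (auto intro: has_vector_derivative_at_within der continuous_on_subset[OF cont])
  have "(\<lambda>n. LINT x|lborel. indicator {- real n .. real n} x *\<^sub>R f x) \<longlonglongrightarrow> (LINT x|lborel. f x)"
  proof (rule integral_dominated_convergence[where w="\<lambda>x. norm (f x)"])
    show "f \<in> borel_measurable lborel" using int by auto
    show "\<And>n. (\<lambda>x. indicator {- real n .. real n} x *\<^sub>R f x) \<in> borel_measurable lborel"
      using int by auto
    show "integrable lborel (\<lambda>x. norm (f x))" using int by auto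
    show "AE x in lborel. (\<lambda>n. indicator {- real n .. real n} x *\<^sub>R f x) \<longlonglongrightarrow> f x"
    proof (intro AE_I2)
      fix x :: real
      obtain N :: nat where "\<bar>x\<bar> \<le> real N" using real_arch_simple by blast
      then have "\<forall>n\<ge>N. indicator {- real n .. real n} x *\<^sub>R f x = f x"
        by (auto simp: indicator_def)
      then show "(\<lambda>n. indicator {- real n .. real n} x *\<^sub>R f x) \<longlonglongrightarrow> f x"
        by (intro tendsto_eventually) (auto simp: eventually_sequentially)
    qed
    show "\<And>n. AE x in lborel. norm (indicator {- real n .. real n} x *\<^sub>R f x) \<le> norm (f x)"
      by (auto simp: indicator_def)
  qed
  moreover have "(\<lambda>n. F (real n) - F (- real n)) \<longlonglongrightarrow> 0 - 0"
  proof (intro tendsto_diff)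
    show "(\<lambda>n. F (real n)) \<longlonglongrightarrow> 0"
      by (rule filterlim_compose[OF top filterlim_real_sequentially])
    show "(\<lambda>n. F (- real n)) \<longlonglongrightarrow> 0"
      by (rule filterlim_compose[OF bot]) (simp add: filterlim_uminus_at_bot filterlim_real_sequentially)
  qed
  ultimately show ?thesis unfolding I by (simp add: LIMSEQ_unique)
qed


lemma sch_int_lin:
  assumes "schwartz h"
  shows "integrable lborel (\<lambda>w. (w - x) * h w)"
proof -
  have a: "integrable lborel (\<lambda>w. w ^ 1 * (deriv ^^ 0) h w)" by (rule sch_integrable[OF assms])
  have b: "integrable lborel (\<lambda>w. w ^ 0 * (deriv ^^ 0) h w)" by (rule sch_integrable[OF assms])
  have "integrable lborel (\<lambda>w. w ^ 1 * (deriv ^^ 0) h w - x * (w ^ 0 * (deriv ^^ 0) h w))"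
    by (rule Bochner_Integration.integrable_diff[OF a integrable_mult_right[OF b]])
  then show ?thesis by (simp add: algebra_simps)
qed

lemma sch_int_d: "schwartz h \<Longrightarrow> integrable lborel (deriv h)"
  using sch_integrable[of h 0 1] by simp

lemma IBP_K:
  assumes s: "0 \<le> Re s" "s \<noteq> 0" and h: "schwartz h"
  shows "(LINT w|lborel. Kn s x w * of_real ((w - x) * h w)) = s / (2 * of_real pi) * Hs s (deriv h) x"
proof -
  define F where "F w = Kn s x w * of_real (h w)" for w
  define f where "f w = (- 2 * of_real pi / s) * (Kn s x w * of_real ((w - x) * h w)) + Kn s x w * of_real (deriv h w)" for w
  have hd: "(h has_real_derivative deriv h w) (at w)" for w
    using sch_der[OF h, of 0 w] by simp
  have der: "(F has_vector_derivative f w) (at w)" for w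
  proof -
    have "((\<lambda>w. Kn s x w * of_real (h w)) has_vector_derivative
       (Kn s x w * of_real (deriv h w) + (- 2 * of_real pi * of_real (w - x) / s * Kn s x w) * of_real (h w))) (at w)"
      by (intro has_vector_derivative_mult Kn_vderiv[OF s(2)] has_vector_derivative_of_real hd)
    then show ?thesis unfolding F_def f_def using s(2) by (simp add: field_simps)
  qed
  have i1: "integrable lborel (\<lambda>w. Kn s x w * of_real ((w - x) * h w))"
    by (rule int_Kp[OF s sch_int_lin[OF h]])
  have i2: "integrable lborel (\<lambda>w. Kn s x w * of_real (deriv h w))"
    by (rule int_Kp[OF s sch_int_d[OF h]])
  have int: "integrable lborel f" unfolding f_def using i1 i2 by auto
  have cont: "continuous_on UNIV f"
  proof -
    have c1: "continuous_on UNIV h" using sch_cont[OF h, of 0] by simp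
    have c2: "continuous_on UNIV (deriv h)" using sch_cont[OF h, of 1] by simp
    show ?thesis unfolding f_def
      by (intro continuous_intros Kn_cont c1 c2 continuous_on_compose2[OF continuous_on_of_real c1]
            continuous_on_compose2[OF continuous_on_of_real c2]) auto
  qed
  obtain c where c: "\<And>w. cmod (Kn s x w) \<le> c" using Kn_norm[OF s] by blast
  have lim: "(F \<longlongrightarrow> 0) F'" if "(h \<longlongrightarrow> 0) F'" for F'
  proof (rule Lim_null_comparison)
    show "\<forall>\<^sub>F w in F'. norm (F w) \<le> c * \<bar>h w\<bar>"
      unfolding F_def using c by (auto simp: norm_mult intro!: mult_right_mono always_eventually)
    show "((\<lambda>w. c * \<bar>h w\<bar>) \<longlongrightarrow> 0) F'"
      using tendsto_mult_right[OF tendsto_rabs_zero[OF that], of c] by (simp add: mult.commute)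
  qed
  have top: "(F \<longlongrightarrow> 0) at_top" using lim sch_lim_top[OF h, of 0] by simp
  have bot: "(F \<longlongrightarrow> 0) at_bot" using lim sch_lim_bot[OF h, of 0] by simp
  have "(LINT w|lborel. f w) = 0" by (rule FTC_R[OF der cont int top bot])
  then have "(- 2 * of_real pi / s) * (LINT w|lborel. Kn s x w * of_real ((w - x) * h w)) + Hs s (deriv h) x = 0"
    unfolding f_def Hs_def using i1 i2 by simp
  then show ?thesis using s(2) by (simp add: field_simps)
qed

lemma Hs_add:
  assumes "0 \<le> Re s" "s \<noteq> 0" "integrable lborel p" "integrable lborel q"
  shows "Hs s (\<lambda>w. p w + q w) x = Hs s p x + Hs s q x"
  unfolding Hs_def using int_Kp[OF assms(1,2,3)] int_Kp[OF assms(1,2,4)]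
  by (simp add: distrib_left)

lemma Hs_lin:
  assumes s: "0 \<le> Re s" "s \<noteq> 0" and p: "integrable lborel p" "integrable lborel (\<lambda>w. w * p w)"
  shows "(LINT w|lborel. Kn s x w * of_real ((w - x) * p w)) = Hs s (\<lambda>w. w * p w) x - of_real x * Hs s p x"
proof -
  have "(LINT w|lborel. Kn s x w * of_real ((w - x) * p w)) =
        (LINT w|lborel. Kn s x w * of_real (w * p w) - of_real x * (Kn s x w * of_real (p w)))"
    by (intro Bochner_Integration.integral_cong) (auto simp: algebra_simps)
  also have "\<dots> = Hs s (\<lambda>w. w * p w) x - of_real x * Hs s p x"
    unfolding Hs_def using int_Kp[OF s p(1)] int_Kp[OF s p(2)] by simp
  finally show ?thesis .
qed

lemma sch_int_x: "schwartz g \<Longrightarrow> integrable lborel (\<lambda>w. w * g w)"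
  using sch_integrable[of g 1 0] by simp

lemma Hs_x:
  assumes s: "0 \<le> Re s" "s \<noteq> 0" and g: "schwartz g"
  shows "of_real x * Hs s g x = Hs s (\<lambda>w. w * g w) x - s / (2 * of_real pi) * Hs s (deriv g) x"
  using IBP_K[OF s g, of x] Hs_lin[OF s sch_integrable0[OF g] sch_int_x[OF g], of x] by simp

lemma deriv_mult_x: "schwartz g \<Longrightarrow> deriv (\<lambda>w. w * g w) = (\<lambda>w. w * deriv g w + g w)"
  using sch_mult_x_derivs[of g 1] by simp

lemma Hs_sq:
  assumes s: "0 \<le> Re s" "s \<noteq> 0" and g: "schwartz g"
  shows "(LINT w|lborel. Kn s x w * of_real ((w - x)\<^sup>2 * g w)) =
     s / (2 * of_real pi) * (Hs s g x + s / (2 * of_real pi) * Hs s (deriv (deriv g)) x)"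
proof -
  have g1: "schwartz (deriv g)" by (rule sch_deriv[OF g])
  have wg: "schwartz (\<lambda>w. w * g w)" by (rule sch_mult_x[OF g])
  have i1: "integrable lborel (\<lambda>w. Kn s x w * of_real ((w - x) * (w * g w)))"
    by (rule int_Kp[OF s sch_int_lin[OF wg]])
  have i2: "integrable lborel (\<lambda>w. Kn s x w * of_real ((w - x) * g w))"
    by (rule int_Kp[OF s sch_int_lin[OF g]])
  have "(LINT w|lborel. Kn s x w * of_real ((w - x)\<^sup>2 * g w)) =
     (LINT w|lborel. Kn s x w * of_real ((w - x) * (w * g w)) - of_real x * (Kn s x w * of_real ((w - x) * g w)))"
    by (intro Bochner_Integration.integral_cong) (auto simp: algebra_simps power2_eq_square)
  also have "\<dots> = (LINT w|lborel. Kn s x w * of_real ((w - x) * (w * g w))) - of_real x * (LINT w|lborel. Kn s x w * of_real ((w - x) * g w))"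
    using i1 i2 by simp
  also have "\<dots> = s / (2 * of_real pi) * (Hs s (deriv (\<lambda>w. w * g w)) x - of_real x * Hs s (deriv g) x)"
    unfolding IBP_K[OF s wg] IBP_K[OF s g] by (simp add: algebra_simps)
  also have "Hs s (deriv (\<lambda>w. w * g w)) x = Hs s (\<lambda>w. w * deriv g w) x + Hs s g x"
    unfolding deriv_mult_x[OF g]
    by (rule Hs_add[OF s sch_int_x[OF g1] sch_integrable0[OF g]])
  also have "Hs s (\<lambda>w. w * deriv g w) x + Hs s g x - of_real x * Hs s (deriv g) x
      = Hs s g x + (LINT w|lborel. Kn s x w * of_real ((w - x) * deriv g w))"
    using Hs_lin[OF s sch_integrable0[OF g1] sch_int_x[OF g1], of x] by simp
  also have "(LINT w|lborel. Kn s x w * of_real ((w - x) * deriv g w)) = s / (2 * of_real pi) * Hs s (deriv (deriv g)) x"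
    by (rule IBP_K[OF s g1])
  finally show ?thesis .
qed


lemma mvt_vec:
  fixes f f' :: "real \<Rightarrow> 'a::real_normed_vector"
  assumes "convex S" "\<And>x. x \<in> S \<Longrightarrow> (f has_vector_derivative f' x) (at x within S)"
    "\<And>x. x \<in> S \<Longrightarrow> norm (f' x) \<le> B" "x \<in> S" "y \<in> S"
  shows "norm (f x - f y) \<le> B * \<bar>x - y\<bar>"
proof -
  have "norm (f x - f y) \<le> B * norm (x - y)"
  proof (rule differentiable_bound[OF assms(1) _ _ assms(4,5)])
    show "(f has_derivative (\<lambda>h. h *\<^sub>R f' z)) (at z within S)" if "z \<in> S" for z
      using assms(2)[OF that] by (simp add: has_vector_derivative_def)
    show "onorm (\<lambda>h. h *\<^sub>R f' z) \<le> B" if "z \<in> S" for z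
      using assms(3)[OF that] by (simp add: onorm_scaleR_left[OF bounded_linear_ident] onorm_id)
  qed
  then show ?thesis by simp
qed

lemma tendsto_param_integral:
  fixes K :: "real \<Rightarrow> real \<Rightarrow> complex"
  assumes meas: "\<And>t. t \<in> S \<Longrightarrow> K t \<in> borel_measurable lborel"
    and meas0: "L \<in> borel_measurable lborel"
    and bnd: "\<And>t w. t \<in> S \<Longrightarrow> cmod (K t w) \<le> B w"
    and intB: "integrable lborel B"
    and lim: "\<And>w. ((\<lambda>t. K t w) \<longlongrightarrow> L w) (at t0 within S)"
  shows "((\<lambda>t. LINT w|lborel. K t w) \<longlongrightarrow> (LINT w|lborel. L w)) (at t0 within S)"
  unfolding tendsto_at_iff_sequentially comp_def
proof (intro allI impI)
  fix X :: "nat \<Rightarrow> real" assume X: "\<forall>i. X i \<in> S - {t0}" "X \<longlonglongrightarrow> t0"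
  show "(\<lambda>i. LINT w|lborel. K (X i) w) \<longlonglongrightarrow> (LINT w|lborel. L w)"
  proof (rule integral_dominated_convergence[where w=B])
    show "\<And>i. K (X i) \<in> borel_measurable lborel" using X meas by auto
    show "AE w in lborel. (\<lambda>i. K (X i) w) \<longlonglongrightarrow> L w"
      using lim X unfolding tendsto_at_iff_sequentially comp_def by auto
    show "\<And>i. AE w in lborel. norm (K (X i) w) \<le> B w" using X bnd by auto
    show "L \<in> borel_measurable lborel" by (rule meas0)
  qed (rule intB)
qed

lemma DUI:
  fixes K K' :: "real \<Rightarrow> real \<Rightarrow> complex" and B :: "real \<Rightarrow> real"
  assumes t0: "a < t0" "t0 < b"
  and der: "\<And>t w. a < t \<Longrightarrow> t < b \<Longrightarrow> ((\<lambda>t. K t w) has_vector_derivative K' t w) (at t)"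
  and bnd: "\<And>t w. a < t \<Longrightarrow> t < b \<Longrightarrow> cmod (K' t w) \<le> B w"
  and intB: "integrable lborel B"
  and meas: "\<And>t. a < t \<Longrightarrow> t < b \<Longrightarrow> K t \<in> borel_measurable lborel"
  and meas': "K' t0 \<in> borel_measurable lborel"
  and intK: "\<And>t. a < t \<Longrightarrow> t < b \<Longrightarrow> integrable lborel (K t)"
  shows "((\<lambda>t. LINT w|lborel. K t w) has_vector_derivative (LINT w|lborel. K' t0 w)) (at t0)"
proof -
  let ?S = "{a<..<b}"
  have S: "t0 \<in> ?S" "open ?S" using t0 by auto
  have intK': "integrable lborel (K' t0)"
    by (rule Bochner_Integration.integrable_bound[OF intB meas']) (use bnd t0 in \<open>auto intro: order_trans[OF _ abs_ge_self]\<close>)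
  have mv: "cmod (K t w - K t0 w) \<le> B w * \<bar>t - t0\<bar>" if "t \<in> ?S" for t w
    by (rule mvt_vec[where S="?S" and f'="\<lambda>t. K' t w"])
       (use that t0 der bnd in \<open>auto intro: has_vector_derivative_at_within\<close>)
  define Q where "Q t w = (K t w - K t0 w - (t - t0) *\<^sub>R K' t0 w) /\<^sub>R \<bar>t - t0\<bar>" for t w
  have "((\<lambda>t. LINT w|lborel. Q t w) \<longlongrightarrow> (LINT (w::real)|lborel. (0::complex))) (at t0 within ?S)"
  proof (rule tendsto_param_integral[where B="\<lambda>w. 2 * B w"])
    show "Q t \<in> borel_measurable lborel" if "t \<in> ?S" for t
      unfolding Q_def using meas[of t] meas[of t0] meas' that t0 by auto
    show "cmod (Q t w) \<le> 2 * B w" if "t \<in> ?S" for t w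
    proof (cases "t = t0")
      case True
      have "0 \<le> B w" using bnd[OF t0, of w] by (meson norm_ge_zero order_trans)
      then show ?thesis using True by (simp add: Q_def)
    next
      case False
      have "cmod (K t w - K t0 w - (t - t0) *\<^sub>R K' t0 w) \<le> cmod (K t w - K t0 w) + cmod ((t - t0) *\<^sub>R K' t0 w)"
        by (rule norm_triangle_ineq4)
      also have "\<dots> \<le> B w * \<bar>t - t0\<bar> + \<bar>t - t0\<bar> * B w"
        using mv[OF that, of w] bnd[OF t0, of w] by (intro add_mono) (auto intro: mult_left_mono)
      finally have n: "cmod (K t w - K t0 w - (t - t0) *\<^sub>R K' t0 w) \<le> (2 * B w) * \<bar>t - t0\<bar>" by simp
      have p: "0 < \<bar>t - t0\<bar>" using False by simp
      have "cmod (Q t w) = cmod (K t w - K t0 w - (t - t0) *\<^sub>R K' t0 w) / \<bar>t - t0\<bar>"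
        unfolding Q_def by (simp add: divide_inverse_commute)
      also have "\<dots> \<le> 2 * B w" using n p by (simp add: divide_le_eq)
      finally show ?thesis .
    qed
    show "integrable lborel (\<lambda>w. 2 * B w)" using intB by auto
    show "((\<lambda>t. Q t w) \<longlongrightarrow> 0) (at t0 within ?S)" for w
    proof -
      have "((\<lambda>t. K t w) has_derivative (\<lambda>h. h *\<^sub>R K' t0 w)) (at t0 within ?S)"
        using der[OF t0, of w] by (simp add: has_vector_derivative_def has_derivative_at_withinI)
      then show ?thesis unfolding has_derivative_at_within Q_def by (simp add: real_norm_def)
    qed
  qed auto
  moreover have "\<forall>\<^sub>F t in at t0 within ?S. (LINT w|lborel. Q t w) =
      ((LINT w|lborel. K t w) - (LINT w|lborel. K t0 w) - (t - t0) *\<^sub>R (LINT w|lborel. K' t0 w)) /\<^sub>R norm (t - t0)"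
  proof -
    have eq: "(LINT w|lborel. Q t w) =
      ((LINT w|lborel. K t w) - (LINT w|lborel. K t0 w) - (t - t0) *\<^sub>R (LINT w|lborel. K' t0 w)) /\<^sub>R norm (t - t0)"
      if t: "t \<in> ?S" for t
    proof -
      have i: "integrable lborel (K t)" "integrable lborel (K t0)" using intK t t0 by auto
      show ?thesis unfolding Q_def using i intK' by (simp add: scaleR_conv_of_real)
    qed
    show ?thesis by (auto simp: eventually_at_filter eq intro!: always_eventually)
  qed
  ultimately have "((\<lambda>t. ((LINT w|lborel. K t w) - (LINT w|lborel. K t0 w) - (t - t0) *\<^sub>R (LINT w|lborel. K' t0 w)) /\<^sub>R norm (t - t0)) \<longlongrightarrow> 0) (at t0 within ?S)"
    by (simp add: tendsto_cong)
  then have "((\<lambda>t. LINT w|lborel. K t w) has_vector_derivative (LINT w|lborel. K' t0 w)) (at t0 within ?S)"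
    unfolding has_vector_derivative_def has_derivative_at_within
    by (simp add: bounded_linear_scaleR_left)
  then show ?thesis using at_within_open[OF S] by simp
qed


lemma cpowr_minus1: "(s::complex) \<noteq> 0 \<Longrightarrow> s powr (a - 1) = s powr a / s"
  by (simp add: powr_def exp_diff left_diff_distrib)

definition Kd :: "complex \<Rightarrow> real \<Rightarrow> real \<Rightarrow> complex" where
  "Kd s x w = (- 1 / (2 * s) + of_real pi * (of_real (w - x))\<^sup>2 / s\<^sup>2) * Kn s x w"

lemma Kn_sderiv:
  assumes "s \<notin> \<real>\<^sub>\<le>\<^sub>0"
  shows "((\<lambda>s. Kn s x w) has_field_derivative Kd s x w) (at s)"
proof -
  have s0: "s \<noteq> 0" using assms by auto
  have "((\<lambda>s. s powr (-1/2) * exp (- of_real pi * (of_real (w - x))\<^sup>2 / s)) has_field_derivative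
     ((-1/2) * s powr (-1/2 - 1) * exp (- of_real pi * (of_real (w - x))\<^sup>2 / s) +
      s powr (-1/2) * (exp (- of_real pi * (of_real (w - x))\<^sup>2 / s) * (of_real pi * (of_real (w - x))\<^sup>2 / s\<^sup>2)))) (at s)"
    using assms s0 by (auto intro!: derivative_eq_intros simp: power2_eq_square field_simps)
  moreover have "(-1/2) * s powr (-1/2 - 1) * exp (- of_real pi * (of_real (w - x))\<^sup>2 / s) +
      s powr (-1/2) * (exp (- of_real pi * (of_real (w - x))\<^sup>2 / s) * (of_real pi * (of_real (w - x))\<^sup>2 / s\<^sup>2))
      = Kd s x w"
    unfolding Kd_def Kn_def cpowr_minus1[OF s0] using s0 by (simp add: field_simps)
  ultimately show ?thesis unfolding Kn_def by simp
qed

definition sp :: "real \<Rightarrow> real \<Rightarrow> complex" where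
  "sp l t = Complex ((1 - t) / l) (t / l)"

definition spd :: "real \<Rightarrow> complex" where
  "spd l = Complex (- 1 / l) (1 / l)"

lemma sp_vderiv: "(sp l has_vector_derivative spd l) (at t)"
proof -
  have "sp l = (\<lambda>t. of_real ((1 - t) / l) + \<i> * of_real (t / l))"
    by (auto simp: sp_def fun_eq_iff complex_eq_iff)
  moreover have "((\<lambda>t. of_real ((1 - t) / l) + \<i> * of_real (t / l)) has_vector_derivative
      (of_real (- 1 / l) + \<i> * of_real (1 / l))) (at t)"
    by (auto intro!: derivative_eq_intros)
  moreover have "of_real (- 1 / l) + \<i> * of_real (1 / l) = spd l"
    by (simp add: spd_def complex_eq_iff)
  ultimately show ?thesis by simp
qed

lemma spd_norm: "l > 0 \<Longrightarrow> cmod (spd l) = sqrt 2 / l"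
  by (simp add: spd_def cmod_def power2_eq_square real_sqrt_divide field_simps)

lemma sp_Re: "l > 0 \<Longrightarrow> t \<le> 1 \<Longrightarrow> 0 \<le> Re (sp l t)"
  by (simp add: sp_def)

lemma sp_notin: "l > 0 \<Longrightarrow> 0 \<le> t \<Longrightarrow> t \<le> 1 \<Longrightarrow> sp l t \<notin> \<real>\<^sub>\<le>\<^sub>0"
  by (auto simp: sp_def complex_nonpos_Reals_iff field_simps)

lemma sp_nz: "l > 0 \<Longrightarrow> 0 \<le> t \<Longrightarrow> t \<le> 1 \<Longrightarrow> sp l t \<noteq> 0"
  using sp_notin by force

lemma sp_norm: 
  assumes "l > 0" "0 \<le> t" "t \<le> 1"
  shows "1 / (2 * l) \<le> cmod (sp l t)"
proof -
  have "1 / (2 * l) \<le> max ((1 - t) / l) (t / l)" using assms by (auto simp: field_simps max_def)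
  also have "\<dots> \<le> cmod (sp l t)"
    using abs_Re_le_cmod[of "sp l t"] abs_Im_le_cmod[of "sp l t"] assms by (auto simp: sp_def)
  finally show ?thesis .
qed

lemma sp_powr:
  assumes "l > 0" "0 \<le> t" "t \<le> 1"
  shows "cmod (sp l t) powr (-1/2) \<le> sqrt (2 * l)"
proof -
  have "cmod (sp l t) powr (-1/2) \<le> (1 / (2 * l)) powr (-1/2)"
    by (rule powr_mono2') (use sp_norm[OF assms] assms in auto)
  also have "\<dots> = sqrt (2 * l)"
    using assms by (simp add: powr_minus_divide powr_half_sqrt[symmetric] powr_divide)
  finally show ?thesis .
qed

lemma sp0: "sp l 0 = of_real (1 / l)"
  by (simp add: sp_def complex_eq_iff)

lemma sp1: "sp l 1 = \<i> * of_real (1 / l)"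
  by (simp add: sp_def complex_eq_iff)

lemma Kn_tderiv:
  assumes "l > 0" "0 \<le> t" "t \<le> 1"
  shows "((\<lambda>t. Kn (sp l t) x w) has_vector_derivative (spd l * Kd (sp l t) x w)) (at t)"
  using field_vector_diff_chain_at[OF sp_vderiv Kn_sderiv[OF sp_notin[OF assms]]]
  by (simp add: o_def)

lemma sch_int_sq:
  assumes "schwartz g"
  shows "integrable lborel (\<lambda>w. (w - x)\<^sup>2 * g w)"
proof -
  have a: "integrable lborel (\<lambda>w. w ^ 2 * (deriv ^^ 0) g w)" by (rule sch_integrable[OF assms])
  have b: "integrable lborel (\<lambda>w. w ^ 1 * (deriv ^^ 0) g w)" by (rule sch_integrable[OF assms])
  have c: "integrable lborel (\<lambda>w. w ^ 0 * (deriv ^^ 0) g w)" by (rule sch_integrable[OF assms])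
  have "integrable lborel (\<lambda>w. w ^ 2 * (deriv ^^ 0) g w - (2 * x) * (w ^ 1 * (deriv ^^ 0) g w) + x\<^sup>2 * (w ^ 0 * (deriv ^^ 0) g w))"
    by (intro Bochner_Integration.integrable_add Bochner_Integration.integrable_diff integrable_mult_right a b c)
  then show ?thesis by (simp add: algebra_simps power2_eq_square)
qed

lemma Kd_identity:
  assumes s: "0 \<le> Re s" "s \<noteq> 0" and g: "schwartz g"
  shows "(LINT w|lborel. Kd s x w * of_real (g w)) = 1 / (4 * of_real pi) * Hs s (deriv (deriv g)) x"
proof -
  have i1: "integrable lborel (\<lambda>w. Kn s x w * of_real (g w))" by (rule int_Kp[OF s sch_integrable0[OF g]])
  have i2: "integrable lborel (\<lambda>w. Kn s x w * of_real ((w - x)\<^sup>2 * g w))" by (rule int_Kp[OF s sch_int_sq[OF g]])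
  have "(LINT w|lborel. Kd s x w * of_real (g w)) =
     (LINT w|lborel. (- 1 / (2 * s)) * (Kn s x w * of_real (g w)) + (of_real pi / s\<^sup>2) * (Kn s x w * of_real ((w - x)\<^sup>2 * g w)))"
    unfolding Kd_def by (intro Bochner_Integration.integral_cong) (auto simp: algebra_simps)
  also have "\<dots> = (- 1 / (2 * s)) * Hs s g x + (of_real pi / s\<^sup>2) * (LINT w|lborel. Kn s x w * of_real ((w - x)\<^sup>2 * g w))"
    unfolding Hs_def using i1 i2 by simp
  also have "\<dots> = 1 / (4 * of_real pi) * Hs s (deriv (deriv g)) x"
    unfolding Hs_sq[OF s g] using s(2) by (simp add: field_simps power2_eq_square)
  finally show ?thesis .
qed

lemma Kd_norm:
  assumes "l > 0" "0 \<le> t" "t \<le> 1"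
  shows "cmod (Kd (sp l t) x w) \<le> (l + 4 * pi * l\<^sup>2 * (w - x)\<^sup>2) * sqrt (2 * l)"
proof -
  let ?s = "sp l t"
  have n: "1 / (2 * l) \<le> cmod ?s" by (rule sp_norm[OF assms])
  have np: "0 < cmod ?s" using n assms by (smt (verit) divide_pos_pos)
  have inv: "1 / cmod ?s \<le> 2 * l" using n np assms by (simp add: field_simps)
  have inv2: "1 / (cmod ?s)\<^sup>2 \<le> 4 * l\<^sup>2"
  proof -
    have "1 / (cmod ?s)\<^sup>2 = (1 / cmod ?s)\<^sup>2" by (simp add: power_divide)
    also have "\<dots> \<le> (2 * l)\<^sup>2" using inv np by (intro power_mono) auto
    finally show ?thesis by (simp add: power_mult_distrib)
  qed
  have "cmod (- 1 / (2 * ?s) + of_real pi * (of_real (w - x))\<^sup>2 / ?s\<^sup>2) \<le>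
        cmod (- 1 / (2 * ?s)) + cmod (of_real pi * (of_real (w - x))\<^sup>2 / ?s\<^sup>2)"
    by (rule norm_triangle_ineq)
  also have "cmod (- 1 / (2 * ?s)) = (1 / cmod ?s) / 2" by (simp add: norm_divide norm_mult)
  also have "cmod (of_real pi * (of_real (w - x))\<^sup>2 / ?s\<^sup>2) = pi * (w - x)\<^sup>2 * (1 / (cmod ?s)\<^sup>2)"
    by (simp add: norm_divide norm_mult norm_power flip: of_real_diff)
  also have "(1 / cmod ?s) / 2 + pi * (w - x)\<^sup>2 * (1 / (cmod ?s)\<^sup>2) \<le> l + pi * (w - x)\<^sup>2 * (4 * l\<^sup>2)"
    using inv inv2 by (intro add_mono mult_left_mono) auto
  finally have a: "cmod (- 1 / (2 * ?s) + of_real pi * (of_real (w - x))\<^sup>2 / ?s\<^sup>2) \<le> l + 4 * pi * l\<^sup>2 * (w - x)\<^sup>2"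
    by (simp add: algebra_simps)
  have b: "cmod (Kn ?s x w) \<le> sqrt (2 * l)"
    using Kn_norm[OF sp_Re[OF assms(1,3)] sp_nz[OF assms], of x w] sp_powr[OF assms] by linarith
  show ?thesis unfolding Kd_def norm_mult
    by (rule mult_mono[OF a b]) (use assms in auto)
qed

lemma Hs_tderiv:
  assumes l: "l > 0" and t: "0 < t" "t < 1" and g: "schwartz g"
  shows "((\<lambda>t. Hs (sp l t) g x) has_vector_derivative (spd l * (1 / (4 * of_real pi) * Hs (sp l t) (deriv (deriv g)) x))) (at t)"
proof -
  define B where "B w = (sqrt 2 / l) * (sqrt (2 * l) * (l * \<bar>g w\<bar> + 4 * pi * l\<^sup>2 * \<bar>(w - x)\<^sup>2 * g w\<bar>))" for w
  have "((\<lambda>t. LINT w|lborel. Kn (sp l t) x w * of_real (g w)) has_vector_derivative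
         (LINT w|lborel. spd l * Kd (sp l t) x w * of_real (g w))) (at t)"
  proof (rule DUI[where a=0 and b=1 and B=B])
    show "((\<lambda>t. Kn (sp l t) x w * of_real (g w)) has_vector_derivative spd l * Kd (sp l t) x w * of_real (g w)) (at t)"
      if "0 < t" "t < 1" for t w
      using has_vector_derivative_mult_right[OF Kn_tderiv[OF l, of t x w], of "of_real (g w)"] that
      by (simp add: ac_simps)
    show "cmod (spd l * Kd (sp l t) x w * of_real (g w)) \<le> B w" if "0 < t" "t < 1" for t w
    proof -
      have "cmod (spd l * Kd (sp l t) x w * of_real (g w)) = (sqrt 2 / l) * cmod (Kd (sp l t) x w) * \<bar>g w\<bar>"
        using l by (simp add: norm_mult spd_norm)
      also have "\<dots> \<le> (sqrt 2 / l) * ((l + 4 * pi * l\<^sup>2 * (w - x)\<^sup>2) * sqrt (2 * l)) * \<bar>g w\<bar>"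
        using Kd_norm[OF l, of t x w] that l by (intro mult_right_mono mult_left_mono) auto
      also have "\<dots> = B w" unfolding B_def by (simp add: algebra_simps abs_mult)
      finally show ?thesis .
    qed
    show "integrable lborel B" unfolding B_def
      using sch_integrable0[OF g] sch_int_sq[OF g, of x]
      by (intro integrable_mult_right Bochner_Integration.integrable_add integrable_abs) auto
    show "(\<lambda>w. Kn (sp l t) x w * of_real (g w)) \<in> borel_measurable lborel" for t
      using sch_meas[OF g, of 0] by simp
    show "(\<lambda>w. spd l * Kd (sp l t) x w * of_real (g w)) \<in> borel_measurable lborel"
      using sch_meas[OF g, of 0] unfolding Kd_def by simp
    show "integrable lborel (\<lambda>w. Kn (sp l t) x w * of_real (g w))" if "0 < t" "t < 1" for t
      by (rule int_Kp[OF sp_Re sp_nz sch_integrable0[OF g]]) (use l that in auto)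
  qed (use t in auto)
  moreover have "(LINT w|lborel. spd l * Kd (sp l t) x w * of_real (g w)) =
      spd l * (1 / (4 * of_real pi) * Hs (sp l t) (deriv (deriv g)) x)"
  proof -
    have "(LINT w|lborel. spd l * Kd (sp l t) x w * of_real (g w)) = spd l * (LINT w|lborel. Kd (sp l t) x w * of_real (g w))"
      by (simp add: mult.assoc)
    also have "\<dots> = spd l * (1 / (4 * of_real pi) * Hs (sp l t) (deriv (deriv g)) x)"
      by (subst Kd_identity[OF sp_Re sp_nz g]) (use l t in auto)
    finally show ?thesis .
  qed
  ultimately show ?thesis unfolding Hs_def by simp
qed


lemma Hs_cont:
  assumes l: "l > 0" and g: "schwartz g"
  shows "continuous_on {0..1} (\<lambda>t. Hs (sp l t) g x)"
  unfolding continuous_on_def Hs_def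
proof (intro ballI)
  fix t0 :: real assume t0: "t0 \<in> {0..1}"
  show "((\<lambda>t. LINT w|lborel. Kn (sp l t) x w * of_real (g w)) \<longlongrightarrow> (LINT w|lborel. Kn (sp l t0) x w * of_real (g w))) (at t0 within {0..1})"
  proof (rule tendsto_param_integral[where B="\<lambda>w. sqrt (2 * l) * \<bar>g w\<bar>"])
    show "(\<lambda>w. Kn (sp l t) x w * of_real (g w)) \<in> borel_measurable lborel" for t
      using sch_meas[OF g, of 0] by simp
    show "(\<lambda>w. Kn (sp l t0) x w * of_real (g w)) \<in> borel_measurable lborel"
      using sch_meas[OF g, of 0] by simp
    show "cmod (Kn (sp l t) x w * of_real (g w)) \<le> sqrt (2 * l) * \<bar>g w\<bar>" if "t \<in> {0..1}" for t w
    proof -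
      have "cmod (Kn (sp l t) x w) \<le> sqrt (2 * l)"
        using Kn_norm[OF sp_Re[of l t] sp_nz[of l t], of x w] sp_powr[of l t] l that by force
      then show ?thesis by (simp add: norm_mult mult_right_mono)
    qed
    show "integrable lborel (\<lambda>w. sqrt (2 * l) * \<bar>g w\<bar>)"
      using sch_integrable0[OF g] by auto
    show "((\<lambda>t. Kn (sp l t) x w * of_real (g w)) \<longlongrightarrow> Kn (sp l t0) x w * of_real (g w)) (at t0 within {0..1})" for w
    proof -
      have "continuous (at t0) (\<lambda>t. Kn (sp l t) x w)"
        using has_vector_derivative_continuous[OF Kn_tderiv[OF l, of t0 x w]] t0 by auto
      then have "continuous (at t0 within {0..1}) (\<lambda>t. Kn (sp l t) x w)"
        by (rule continuous_at_imp_continuous_at_within)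
      then have "((\<lambda>t. Kn (sp l t) x w) \<longlongrightarrow> Kn (sp l t0) x w) (at t0 within {0..1})"
        by (simp add: continuous_within)
      then show ?thesis by (intro tendsto_intros)
    qed
  qed
qed

lemma SEG:
  assumes l: "l > 0" and g: "schwartz g" and t: "0 \<le> t" "t \<le> 1"
    and B: "\<And>\<xi>. 0 < \<xi> \<Longrightarrow> \<xi> < 1 \<Longrightarrow> cmod (Hs (sp l \<xi>) (deriv (deriv g)) x) \<le> B"
  shows "cmod (Hs (sp l t) g x - Hs (sp l 0) g x) \<le> t * (sqrt 2 / l) * B / (4 * pi)"
proof (cases "t = 0")
  case True then show ?thesis by simp
next
  case False
  then have t0: "0 < t" using t by simp
  let ?F = "\<lambda>t. Hs (sp l t) g x"
  let ?D = "\<lambda>t. spd l * (1 / (4 * of_real pi) * Hs (sp l t) (deriv (deriv g)) x)"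
  have c: "continuous_on {0..t} ?F"
    by (rule continuous_on_subset[OF Hs_cont[OF l g]]) (use t in auto)
  have d: "(?F has_derivative (\<lambda>h. h *\<^sub>R ?D \<xi>)) (at \<xi>)" if "0 < \<xi>" "\<xi> < t" for \<xi>
    using Hs_tderiv[OF l _ _ g, of \<xi> x] that t unfolding has_vector_derivative_def by auto
  obtain \<xi> where \<xi>: "\<xi> \<in> {0<..<t}" "norm (?F t - ?F 0) \<le> norm ((t - 0) *\<^sub>R ?D \<xi>)"
    using mvt_general[OF t0 c d] by blast
  have "norm ((t - 0) *\<^sub>R ?D \<xi>) = t * ((sqrt 2 / l) * (cmod (Hs (sp l \<xi>) (deriv (deriv g)) x) / (4 * pi)))"
    using t0 l by (simp add: norm_mult spd_norm norm_divide)
  also have "\<dots> \<le> t * ((sqrt 2 / l) * (B / (4 * pi)))"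
    using B[of \<xi>] \<xi>(1) t t0 l by (intro mult_left_mono divide_right_mono) auto
  finally show ?thesis using \<xi>(2) by simp
qed


lemma Kn_real:
  assumes "\<tau> > 0"
  shows "Kn (of_real \<tau>) x w = of_real (normal_density x (sqrt (\<tau> / (2 * pi))) w)"
proof -
  have p: "(of_real \<tau> :: complex) powr (-1/2) = of_real (1 / sqrt \<tau>)"
  proof -
    have "(of_real \<tau> :: complex) powr (-1/2) = of_real \<tau> powr (of_real (-1/2))" by simp
    also have "\<dots> = of_real (\<tau> powr (-1/2))" using assms by (intro powr_of_real) auto
    also have "\<tau> powr (-1/2) = 1 / sqrt \<tau>" using assms by (simp add: powr_minus_divide powr_half_sqrt)
    finally show ?thesis .
  qed
  have e: "exp (- of_real pi * (of_real (w - x))\<^sup>2 / of_real \<tau>) = (of_real (exp (- pi * (w - x)\<^sup>2 / \<tau>)) :: complex)"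
    by (simp flip: exp_of_real)
  have n: "normal_density x (sqrt (\<tau> / (2 * pi))) w = 1 / sqrt \<tau> * exp (- pi * (w - x)\<^sup>2 / \<tau>)"
    using assms unfolding normal_density_def by (simp add: power2_eq_square field_simps)
  show ?thesis unfolding Kn_def p e n by simp
qed

lemma Hs_real:
  assumes "\<tau> > 0"
  shows "Hs (of_real \<tau>) g x = of_real (LINT w|lborel. normal_density x (sqrt (\<tau> / (2 * pi))) w * g w)"
  unfolding Hs_def Kn_real[OF assms] by (simp flip: of_real_mult)

lemma taylor2:
  assumes g: "schwartz g" and M: "\<And>y. \<bar>deriv (deriv g) y\<bar> \<le> M"
  shows "\<bar>g w - g x - (w - x) * deriv g x\<bar> \<le> M * (w - x)\<^sup>2"
proof -
  have d0: "(g has_real_derivative deriv g y) (at y)" for y using sch_der[OF g, of 0 y] by simp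
  have d1: "(deriv g has_real_derivative deriv (deriv g) y) (at y)" for y using sch_der[OF g, of 1 y] by simp
  have l1: "\<bar>deriv g y - deriv g x\<bar> \<le> M * \<bar>y - x\<bar>" for y
    using mvt_vec[of UNIV "deriv g" "deriv (deriv g)" M y x] d1 M
    by (auto simp: has_real_derivative_iff_has_vector_derivative[symmetric] intro: has_field_derivative_at_within)
  define h where "h y = g y - g x - (y - x) * deriv g x" for y
  have dh: "(h has_vector_derivative (deriv g y - deriv g x)) (at y within S)" for y S
    unfolding h_def has_real_derivative_iff_has_vector_derivative[symmetric]
    using has_field_derivative_at_within[OF d0[of y], of S]
    by (auto intro!: derivative_eq_intros)
  let ?S = "{min x w .. max x w}"
  have "norm (h w - h x) \<le> (M * \<bar>w - x\<bar>) * \<bar>w - x\<bar>"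
  proof (rule mvt_vec[of ?S h "\<lambda>y. deriv g y - deriv g x"])
    show "norm (deriv g y - deriv g x) \<le> M * \<bar>w - x\<bar>" if "y \<in> ?S" for y
    proof -
      have "\<bar>y - x\<bar> \<le> \<bar>w - x\<bar>" using that by (auto simp: min_def max_def split: if_splits)
      moreover have "0 \<le> M" using M[of 0] by linarith
      ultimately show ?thesis using l1[of y] by (simp add: order_trans[OF _ mult_left_mono])
    qed
  qed (auto intro: dh)
  then show ?thesis unfolding h_def by (simp add: power2_eq_square abs_mult)
qed

lemma abs_int_bound:
  fixes f g :: "real \<Rightarrow> real"
  assumes "integrable lborel g" "\<And>x. \<bar>f x\<bar> \<le> g x"
  shows "\<bar>LINT x|lborel. f x\<bar> \<le> (LINT x|lborel. g x)"
proof -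
  have "\<bar>LINT x|lborel. f x\<bar> \<le> (LINT x|lborel. \<bar>f x\<bar>)"
    using integral_norm_bound[of lborel f] by simp
  also have "\<dots> \<le> (LINT x|lborel. g x)"
    by (rule integral_mono') (use assms in \<open>auto intro: order_trans[OF abs_ge_zero]\<close>)
  finally show ?thesis .
qed

lemma heat:
  assumes t: "\<tau> > 0" and g: "schwartz g" and M: "\<And>y. \<bar>deriv (deriv g) y\<bar> \<le> M"
  shows "cmod (Hs (of_real \<tau>) g x - of_real (g x)) \<le> M * \<tau> / (2 * pi)"
proof -
  define \<sigma> where "\<sigma> = sqrt (\<tau> / (2 * pi))"
  have \<sigma>: "0 < \<sigma>" using t by (simp add: \<sigma>_def)
  have \<sigma>2: "\<sigma>\<^sup>2 = \<tau> / (2 * pi)" using t by (simp add: \<sigma>_def)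
  let ?n = "normal_density x \<sigma>"
  obtain C where C: "\<forall>y. \<bar>y ^ 0 * (deriv ^^ 0) g y\<bar> \<le> C" using sch_bnd[OF g] by blast
  have nint: "integrable lborel ?n" using \<sigma> by simp
  have ig: "integrable lborel (\<lambda>w. ?n w * g w)"
  proof (rule Bochner_Integration.integrable_bound[OF integrable_mult_right[OF nint, of C]])
    show "(\<lambda>w. ?n w * g w) \<in> borel_measurable lborel" using sch_meas[OF g, of 0] by simp
    show "AE w in lborel. norm (?n w * g w) \<le> norm (C * ?n w)"
    proof (intro AE_I2)
      fix w
      have "\<bar>g w\<bar> \<le> \<bar>C\<bar>" using C[rule_format, of w] by simp
      then have "normal_density x \<sigma> w * \<bar>g w\<bar> \<le> normal_density x \<sigma> w * \<bar>C\<bar>"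
        by (intro mult_left_mono) auto
      then show "norm (?n w * g w) \<le> norm (C * ?n w)" by (simp add: abs_mult mult.commute)
    qed
  qed
  have i1: "integrable lborel (\<lambda>w. ?n w * (w - x) ^ 1)" using integrable_normal_moment[OF \<sigma>] by blast
  have m1: "(LINT w|lborel. ?n w * (w - x) ^ 1) = 0"
    using normal_moment_odd[OF \<sigma>, of x 0] by (simp add: has_bochner_integral_integral_eq)
  have m2: "(LINT w|lborel. ?n w * (w - x) ^ 2) = \<sigma>\<^sup>2"
    using normal_moment_even[OF \<sigma>, of x 1] has_bochner_integral_integral_eq by fastforce
  have i2: "integrable lborel (\<lambda>w. ?n w * (w - x) ^ 2)" using integrable_normal_moment[OF \<sigma>] by blast
  have "(LINT w|lborel. ?n w * (g w - g x - (w - x) * deriv g x)) =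
        (LINT w|lborel. ?n w * g w - g x * ?n w - deriv g x * (?n w * (w - x) ^ 1))"
    by (intro Bochner_Integration.integral_cong) (auto simp: algebra_simps)
  also have "\<dots> = (LINT w|lborel. ?n w * g w) - g x * (LINT w|lborel. ?n w) - deriv g x * (LINT w|lborel. ?n w * (w - x) ^ 1)"
    using ig nint i1 by simp
  also have "\<dots> = (LINT w|lborel. ?n w * g w) - g x"
    using \<sigma> m1 by simp
  finally have eq: "(LINT w|lborel. ?n w * g w) - g x = (LINT w|lborel. ?n w * (g w - g x - (w - x) * deriv g x))" by simp
  have "\<bar>LINT w|lborel. ?n w * (g w - g x - (w - x) * deriv g x)\<bar> \<le> (LINT w|lborel. M * (?n w * (w - x) ^ 2))"
  proof (rule abs_int_bound)
    show "integrable lborel (\<lambda>w. M * (?n w * (w - x) ^ 2))" using i2 by simp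
    show "\<bar>?n w * (g w - g x - (w - x) * deriv g x)\<bar> \<le> M * (?n w * (w - x) ^ 2)" for w
    proof -
      have "\<bar>?n w * (g w - g x - (w - x) * deriv g x)\<bar> = ?n w * \<bar>g w - g x - (w - x) * deriv g x\<bar>"
        by (simp add: abs_mult)
      also have "\<dots> \<le> ?n w * (M * (w - x)\<^sup>2)"
        using taylor2[OF g M, of w x] by (intro mult_left_mono) auto
      finally show ?thesis by (simp add: ac_simps)
    qed
  qed
  also have "\<dots> = M * \<sigma>\<^sup>2" using m2 by simp
  finally have "\<bar>(LINT w|lborel. ?n w * g w) - g x\<bar> \<le> M * \<tau> / (2 * pi)" using eq \<sigma>2 by simp
  then show ?thesis unfolding Hs_real[OF t] \<sigma>_def[symmetric]
    by (simp flip: of_real_diff)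
qed

lemma heat_bound:
  assumes t: "\<tau> > 0" and g: "schwartz g" and M: "\<And>y. \<bar>g y\<bar> \<le> M"
  shows "cmod (Hs (of_real \<tau>) g x) \<le> M"
proof -
  define \<sigma> where "\<sigma> = sqrt (\<tau> / (2 * pi))"
  have \<sigma>: "0 < \<sigma>" using t by (simp add: \<sigma>_def)
  let ?n = "normal_density x \<sigma>"
  have nint: "integrable lborel ?n" using \<sigma> by simp
  have "\<bar>LINT w|lborel. ?n w * g w\<bar> \<le> (LINT w|lborel. M * ?n w)"
  proof (rule abs_int_bound)
    show "integrable lborel (\<lambda>w. M * ?n w)" using nint by simp
    show "\<bar>?n w * g w\<bar> \<le> M * ?n w" for w
      using mult_right_mono[OF M[of w] normal_density_nonneg[of x \<sigma> w]] by (simp add: abs_mult mult.commute)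
  qed
  also have "\<dots> = M" using \<sigma> by simp
  finally show ?thesis unfolding Hs_real[OF t] \<sigma>_def[symmetric] by simp
qed


lemma sq_ineq: "l \<ge> 1/2 \<Longrightarrow> sqrt 2 / l * sqrt (2 * l) \<le> 4"
proof -
  assume l: "l \<ge> 1/2"
  have "sqrt 2 * sqrt (2 * l) = 2 * sqrt l" by (simp add: real_sqrt_mult mult.assoc[symmetric])
  moreover have "sqrt l \<le> 2 * l"
  proof -
    have "l * 1 \<le> l * (4 * l)" using l by (intro mult_left_mono) auto
    then have "sqrt l \<le> sqrt ((2 * l)\<^sup>2)" by (intro real_sqrt_le_mono) (simp add: power2_eq_square)
    also have "sqrt ((2 * l)\<^sup>2) = 2 * l" using l by (subst real_sqrt_abs) simp
    finally show ?thesis .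
  qed
  ultimately show ?thesis using l by (simp add: field_simps)
qed

lemma sch_sup: "schwartz g \<Longrightarrow> \<exists>M. \<forall>y. \<bar>(deriv ^^ n) g y\<bar> \<le> M"
  using sch_bnd[of g 0 n] by simp

lemma M0:
  assumes g: "schwartz g"
  shows "\<exists>C. \<forall>l x. l \<ge> 1/2 \<longrightarrow> cmod (Hs (sp l 1) g x - of_real (g x)) \<le> C / l"
proof -
  define g2 where "g2 = deriv (deriv g)"
  have g2s: "schwartz g2" unfolding g2_def by (intro sch_deriv g)
  obtain M2 where M2: "\<And>y. \<bar>g2 y\<bar> \<le> M2" using sch_sup[OF g, of 2] unfolding g2_def by (auto simp: numeral_2_eq_2)
  define I4 where "I4 = (LINT w|lborel. \<bar>deriv (deriv g2) w\<bar>)"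
  have I4: "0 \<le> I4" unfolding I4_def by simp
  define B where "B = M2 + 4 * I4 / (4 * pi)"
  define C where "C = sqrt 2 * B / (4 * pi) + M2 / (2 * pi)"
  show ?thesis
  proof (intro exI allI impI)
    fix l x :: real assume l: "1/2 \<le> l"
    have l0: "0 < l" using l by simp
    have crude: "cmod (Hs (sp l \<eta>) (deriv (deriv g2)) x) \<le> sqrt (2 * l) * I4" if "0 < \<eta>" "\<eta> < 1" for \<eta>
    proof -
      have "cmod (Hs (sp l \<eta>) (deriv (deriv g2)) x) \<le> cmod (sp l \<eta>) powr (-1/2) * I4"
        unfolding I4_def
        by (rule Hs_bound[OF sp_Re sp_nz]) (use l0 that sch_int_d[OF sch_deriv[OF g2s]] in auto)
      also have "\<dots> \<le> sqrt (2 * l) * I4"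
        using sp_powr[of l \<eta>] l0 that I4 by (intro mult_right_mono) auto
      finally show ?thesis .
    qed
    have Bb: "cmod (Hs (sp l \<xi>) g2 x) \<le> B" if "0 < \<xi>" "\<xi> < 1" for \<xi>
    proof -
      have "cmod (Hs (sp l \<xi>) g2 x) \<le> cmod (Hs (sp l 0) g2 x) + cmod (Hs (sp l \<xi>) g2 x - Hs (sp l 0) g2 x)"
        by (metis add.commute diff_add_cancel norm_triangle_ineq)
      also have "cmod (Hs (sp l 0) g2 x) \<le> M2"
        unfolding sp0 by (rule heat_bound[OF _ g2s M2]) (use l0 in auto)
      also have "cmod (Hs (sp l \<xi>) g2 x - Hs (sp l 0) g2 x) \<le> \<xi> * (sqrt 2 / l) * (sqrt (2 * l) * I4) / (4 * pi)"
        by (rule SEG[OF l0 g2s]) (use that crude in auto)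
      also have "\<xi> * (sqrt 2 / l) * (sqrt (2 * l) * I4) / (4 * pi) \<le> 1 * (4 * I4) / (4 * pi)"
      proof -
        have "\<xi> * (sqrt 2 / l) * (sqrt (2 * l) * I4) = \<xi> * ((sqrt 2 / l * sqrt (2 * l)) * I4)" by simp
        also have "\<dots> \<le> 1 * (4 * I4)"
          using that sq_ineq[OF l] I4 l0 by (intro mult_mono) auto
        finally show ?thesis by (rule divide_right_mono) simp
      qed
      finally show ?thesis unfolding B_def by simp
    qed
    have "cmod (Hs (sp l (1/2)) g2 x) \<le> B" by (rule Bb) auto
    then have B0: "0 \<le> B" using norm_ge_zero order_trans by blast
    have s1: "cmod (Hs (sp l 1) g x - Hs (sp l 0) g x) \<le> 1 * (sqrt 2 / l) * B / (4 * pi)"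
      by (rule SEG[OF l0 g]) (use Bb in \<open>auto simp: g2_def\<close>)
    have s2: "cmod (Hs (sp l 0) g x - of_real (g x)) \<le> M2 * (1 / l) / (2 * pi)"
      unfolding sp0 by (rule heat[OF _ g]) (use l0 M2 in \<open>auto simp: g2_def\<close>)
    have "cmod (Hs (sp l 1) g x - of_real (g x)) \<le> cmod (Hs (sp l 1) g x - Hs (sp l 0) g x) + cmod (Hs (sp l 0) g x - of_real (g x))"
      using norm_triangle_ineq[of "Hs (sp l 1) g x - Hs (sp l 0) g x" "Hs (sp l 0) g x - of_real (g x)"] by simp
    also have "\<dots> \<le> 1 * (sqrt 2 / l) * B / (4 * pi) + M2 * (1 / l) / (2 * pi)"
      using s1 s2 by (rule add_mono)
    also have "\<dots> = C / l" unfolding C_def using l0 by (simp add: field_simps)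
    finally show "cmod (Hs (sp l 1) g x - of_real (g x)) \<le> C / l" .
  qed
qed

lemma DEC:
  "\<forall>g. schwartz g \<longrightarrow> (\<exists>C. \<forall>l x. l \<ge> 1/2 \<longrightarrow> \<bar>x\<bar> ^ k * cmod (Hs (sp l 1) g x - of_real (g x)) \<le> C / l)"
proof (induction k)
  case 0 then show ?case using M0 by simp
next
  case (Suc k)
  show ?case
  proof (intro allI impI)
    fix g assume g: "schwartz g"
    obtain C1 where C1: "\<And>l x. l \<ge> 1/2 \<Longrightarrow> \<bar>x\<bar> ^ k * cmod (Hs (sp l 1) (\<lambda>w. w * g w) x - of_real (x * g x)) \<le> C1 / l"
      using Suc.IH sch_mult_x[OF g] by blast
    obtain C2 where C2: "\<And>l x. l \<ge> 1/2 \<Longrightarrow> \<bar>x\<bar> ^ k * cmod (Hs (sp l 1) (deriv g) x - of_real (deriv g x)) \<le> C2 / l"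
      using Suc.IH sch_deriv[OF g] by blast
    obtain C3 where C3: "\<And>x. \<bar>x ^ k * (deriv ^^ 1) g x\<bar> \<le> C3"
      using sch_bnd[OF g, of k 1] by blast
    define C where "C = C1 + (2 * \<bar>C2\<bar> + C3) / (2 * pi)"
    show "\<exists>C. \<forall>l x. l \<ge> 1/2 \<longrightarrow> \<bar>x\<bar> ^ Suc k * cmod (Hs (sp l 1) g x - of_real (g x)) \<le> C / l"
    proof (intro exI allI impI)
      fix l x :: real assume l: "1/2 \<le> l"
      have l0: "0 < l" using l by simp
      let ?s = "sp l 1"
      have sRe: "0 \<le> Re ?s" by (rule sp_Re) (use l0 in auto)
      have snz: "?s \<noteq> 0" by (rule sp_nz) (use l0 in auto)
      have sn: "cmod ?s = 1 / l" using l0 by (simp add: sp1 norm_mult norm_divide)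
      let ?Dg = "Hs ?s g x - of_real (g x)"
      let ?Dw = "Hs ?s (\<lambda>w. w * g w) x - of_real (x * g x)"
      let ?Dd = "Hs ?s (deriv g) x - of_real (deriv g x)"
      have id: "of_real x * ?Dg = ?Dw - ?s / (2 * of_real pi) * (?Dd + of_real (deriv g x))"
        using Hs_x[OF sRe snz g, of x] by (simp add: algebra_simps)
      have "\<bar>x\<bar> ^ Suc k * cmod ?Dg = \<bar>x\<bar> ^ k * cmod (?Dw - ?s / (2 * of_real pi) * (?Dd + of_real (deriv g x)))"
        unfolding id[symmetric] by (simp add: norm_mult)
      also have "\<dots> \<le> \<bar>x\<bar> ^ k * (cmod ?Dw + (1 / l) / (2 * pi) * (cmod ?Dd + \<bar>deriv g x\<bar>))"
      proof (intro mult_left_mono)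
        have a: "cmod (?Dw - ?s / (2 * of_real pi) * (?Dd + of_real (deriv g x))) \<le>
              cmod ?Dw + cmod (?s / (2 * of_real pi) * (?Dd + of_real (deriv g x)))"
          by (rule norm_triangle_ineq4)
        have b: "cmod (?s / (2 * of_real pi) * (?Dd + of_real (deriv g x))) = (1 / l) / (2 * pi) * cmod (?Dd + of_real (deriv g x))"
          by (simp add: norm_mult norm_divide sn)
        have c: "cmod (?Dd + of_real (deriv g x)) \<le> cmod ?Dd + \<bar>deriv g x\<bar>"
          using norm_triangle_ineq[of ?Dd "of_real (deriv g x)"] by simp
        have d: "(1 / l) / (2 * pi) * cmod (?Dd + of_real (deriv g x)) \<le> (1 / l) / (2 * pi) * (cmod ?Dd + \<bar>deriv g x\<bar>)"
          using c l0 by (intro mult_left_mono) auto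
        show "cmod (?Dw - ?s / (2 * of_real pi) * (?Dd + of_real (deriv g x))) \<le>
              cmod ?Dw + (1 / l) / (2 * pi) * (cmod ?Dd + \<bar>deriv g x\<bar>)"
          using a b d by linarith
      qed simp
      also have "\<dots> = \<bar>x\<bar> ^ k * cmod ?Dw + (1 / l) / (2 * pi) * (\<bar>x\<bar> ^ k * cmod ?Dd + \<bar>x ^ k * (deriv ^^ 1) g x\<bar>)"
        by (simp add: algebra_simps abs_mult power_abs)
      also have "\<dots> \<le> C1 / l + (1 / l) / (2 * pi) * (2 * \<bar>C2\<bar> + C3)"
      proof (intro add_mono mult_left_mono)
        show "\<bar>x\<bar> ^ k * cmod ?Dw \<le> C1 / l" by (rule C1[OF l])
        have "\<bar>x\<bar> ^ k * cmod ?Dd \<le> C2 / l" by (rule C2[OF l])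
        also have "C2 / l \<le> \<bar>C2\<bar> / l" using l0 by (simp add: divide_right_mono)
        also have "\<bar>C2\<bar> / l \<le> 2 * \<bar>C2\<bar>"
        proof -
          have "\<bar>C2\<bar> * 1 \<le> \<bar>C2\<bar> * (2 * l)" using l by (intro mult_left_mono) auto
          then show ?thesis using l0 by (simp add: field_simps)
        qed
        finally show "\<bar>x\<bar> ^ k * cmod ?Dd \<le> 2 * \<bar>C2\<bar>" .
        show "\<bar>x ^ k * (deriv ^^ 1) g x\<bar> \<le> C3" by (rule C3)
      qed (use l0 in auto)
      also have "\<dots> = C / l" unfolding C_def using l0 by (simp add: field_simps)
      finally show "\<bar>x\<bar> ^ Suc k * cmod ?Dg \<le> C / l" .
    qed
  qed
qed


lemma sp1_powr:
  assumes "l > 0"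
  shows "sp l 1 powr (-1/2) = of_real (sqrt l) * exp (- \<i> * of_real pi / 4)"
proof -
  have "Ln (sp l 1) = of_real (ln (1 / l)) + \<i> * of_real pi / 2"
  proof -
    have "Ln (of_real (1 / l)) = of_real (ln (1 / l))" using assms by (intro Ln_of_real) auto
    then show ?thesis unfolding sp1 using assms by (subst Ln_times_ii) auto
  qed
  then have "sp l 1 powr (-1/2) = exp (- (\<i> * of_real pi / 4) - of_real (ln (1 / l)) / 2)"
    unfolding powr_def using assms by (auto simp: sp1 algebra_simps)
  also have "\<dots> = of_real (exp (- ln (1 / l) / 2)) * exp (- \<i> * of_real pi / 4)"
  proof -
    have "- (\<i> * of_real pi / 4) - of_real (ln (1 / l)) / 2 = of_real (- ln (1 / l) / 2) + (- \<i> * of_real pi / 4)"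
      by simp
    then show ?thesis by (simp only: exp_add exp_of_real)
  qed
  also have "exp (- ln (1 / l) / 2) = sqrt l"
  proof -
    have "exp (- ln (1 / l) / 2) = l powr (1/2)" using assms by (simp add: powr_def ln_div)
    then show ?thesis using assms by (simp add: powr_half_sqrt)
  qed
  finally show ?thesis by simp
qed

lemma Kn_sp1:
  assumes "l > 0"
  shows "Kn (sp l 1) x w = of_real (sqrt l) * exp (- \<i> * of_real pi / 4) * exp (\<i> * of_real (pi * l * (w - x)\<^sup>2))"
proof -
  have "- of_real pi * (of_real (w - x))\<^sup>2 / sp l 1 = \<i> * of_real (pi * l * (w - x)\<^sup>2)"
    using assms unfolding sp1 by (simp add: field_simps)
  then show ?thesis unfolding Kn_def sp1_powr[OF assms] by simp
qed

lemma phase_id: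
  assumes s: "sin p \<noteq> 0" and c: "cos p \<noteq> 0"
  shows "2 * pi * (((1/2) * (t\<^sup>2 + w\<^sup>2) * cos p - t * w) / sin p) = pi * cot p * (w - t / cos p)\<^sup>2 - pi * t\<^sup>2 * tan p"
proof -
  have e: "(sin p)\<^sup>2 = 1 - (cos p)\<^sup>2" by (simp add: sin_squared_eq)
  have "pi * cot p * (w - t / cos p)\<^sup>2 - pi * t\<^sup>2 * tan p
      = pi * (cos p * (w * cos p - t)\<^sup>2 - t\<^sup>2 * (sin p)\<^sup>2 * cos p) / (sin p * (cos p)\<^sup>2)"
    using s c by (simp add: tan_def cot_def field_simps power2_eq_square)
  also have "\<dots> = pi * (cos p * (w * cos p - t)\<^sup>2 - t\<^sup>2 * (1 - (cos p)\<^sup>2) * cos p) / (sin p * (cos p)\<^sup>2)"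
    unfolding e ..
  also have "\<dots> = 2 * pi * (((1/2) * (t\<^sup>2 + w\<^sup>2) * cos p - t * w) / sin p)"
    using s c by (simp add: field_simps power2_eq_square)
  finally show ?thesis ..
qed

lemma pos_not_mult_pi:
  assumes "0 < (p::real)" "p < 1"
  shows "\<not> (\<exists>k::int. p = pi * of_int k)"
proof
  assume "\<exists>k::int. p = pi * of_int k"
  then obtain k :: int where k: "p = pi * of_int k" by blast
  show False
  proof (cases "k \<le> 0")
    case True
    then have "pi * of_int k \<le> 0" by (simp add: mult_nonneg_nonpos)
    then show False using k assms by simp
  next
    case False
    then have "(1::real) \<le> of_int k" by simp
    then have "pi * 1 \<le> pi * of_int k" by (intro mult_left_mono) auto
    then show False using k assms pi_gt3 by linarith
  qed
qed

lemma sin_cos_pos: "0 < (p::real) \<Longrightarrow> p < 1 \<Longrightarrow> 0 < sin p \<and> 0 < cos p"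
  using sin_gt_zero[of p] cos_gt_zero[of p] pi_gt3 by auto

lemma frft_pos:
  assumes p: "0 < p" "p < 1"
  shows "frft f p t = of_real (cos p powr (-1/2)) * exp (- \<i> * of_real (pi * t\<^sup>2 * tan p)) * Hs (sp (cot p) 1) f (t / cos p)"
proof -
  have sc: "0 < sin p" "0 < cos p" using sin_cos_pos[OF p] by auto
  define l where "l = cot p"
  have l0: "0 < l" unfolding l_def cot_def using sc by simp
  define x where "x = t / cos p"
  define E where "E = exp (- \<i> * of_real (pi * t\<^sup>2 * tan p))"
  have n1: "\<not> (\<exists>k::int. p = 2 * pi * of_int k)"
  proof
    assume "\<exists>k::int. p = 2 * pi * of_int k"
    then obtain k :: int where "p = 2 * pi * of_int k" by blast
    then have "p = pi * of_int (2 * k)" by simp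
    then show False using pos_not_mult_pi[OF p] by blast
  qed
  have n2: "\<not> (\<exists>k::int. p = pi * of_int k)" by (rule pos_not_mult_pi[OF p])
  have fl: "\<lfloor>p / pi\<rfloor> = 0"
    using p pi_gt3 by (intro floor_unique) (auto simp: field_simps)
  have sig: "sigma_phase p = 1" unfolding sigma_phase_def fl by simp
  have ph: "e2pi (((1/2) * (t\<^sup>2 + w\<^sup>2) * cos p - t * w) / sin p) = E * exp (\<i> * of_real (pi * l * (w - x)\<^sup>2))" for w
  proof -
    have "e2pi (((1/2) * (t\<^sup>2 + w\<^sup>2) * cos p - t * w) / sin p)
        = exp (\<i> * of_real (2 * pi * (((1/2) * (t\<^sup>2 + w\<^sup>2) * cos p - t * w) / sin p)))"
      unfolding e2pi_def by (simp add: algebra_simps)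
    also have "2 * pi * (((1/2) * (t\<^sup>2 + w\<^sup>2) * cos p - t * w) / sin p) = pi * l * (w - x)\<^sup>2 + (- (pi * t\<^sup>2 * tan p))"
      unfolding l_def x_def using phase_id[of p t w] sc by simp
    also have "exp (\<i> * of_real (pi * l * (w - x)\<^sup>2 + (- (pi * t\<^sup>2 * tan p)))) = E * exp (\<i> * of_real (pi * l * (w - x)\<^sup>2))"
    proof -
      have eq: "\<i> * of_real (pi * l * (w - x)\<^sup>2 + (- (pi * t\<^sup>2 * tan p))) =
          (- \<i> * of_real (pi * t\<^sup>2 * tan p)) + \<i> * of_real (pi * l * (w - x)\<^sup>2)"
        by (simp add: algebra_simps)
      show ?thesis unfolding E_def by (simp only: eq exp_add)
    qed
    finally show ?thesis .
  qed
  define J where "J = (LINT w|lborel. exp (\<i> * of_real (pi * l * (w - x)\<^sup>2)) * of_real (f w))"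
  have fr: "frft f p t = e2pi (- 1 / 8) * of_real (sin p powr (-1/2)) * (E * J)"
  proof -
    have "frft f p t = e2pi (- sigma_phase p / 8) * complex_of_real (\<bar>sin p\<bar> powr (-1/2)) *
       (LINT w|lborel. e2pi (((1/2) * (t\<^sup>2 + w\<^sup>2) * cos p - t * w) / sin p) * complex_of_real (f w))"
      unfolding frft_def using n1 n2 by simp
    also have "(LINT w|lborel. e2pi (((1/2) * (t\<^sup>2 + w\<^sup>2) * cos p - t * w) / sin p) * complex_of_real (f w)) = E * J"
      unfolding ph J_def by (simp add: mult.assoc)
    finally show ?thesis using sc sig by simp
  qed
  have hs: "Hs (sp l 1) f x = of_real (sqrt l) * exp (- \<i> * of_real pi / 4) * J"
    unfolding Hs_def Kn_sp1[OF l0] J_def by (simp add: mult.assoc)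
  have e8: "e2pi (- 1 / 8) = exp (- \<i> * of_real pi / 4)"
    unfolding e2pi_def by (simp add: field_simps)
  have pw: "sin p powr (-1/2) = cos p powr (-1/2) * sqrt l"
  proof -
    have "sin p powr (-1/2) = 1 / sqrt (sin p)" using sc by (simp add: powr_minus_divide powr_half_sqrt)
    moreover have "cos p powr (-1/2) = 1 / sqrt (cos p)" using sc by (simp add: powr_minus_divide powr_half_sqrt)
    moreover have "sqrt l = sqrt (cos p) / sqrt (sin p)" unfolding l_def cot_def by (simp add: real_sqrt_divide)
    ultimately show ?thesis using sc by simp
  qed
  show ?thesis
    unfolding fr l_def[symmetric] x_def[symmetric] E_def[symmetric] hs e8 pw by (simp add: ac_simps)
qed


lemma cos1_ge: "1/2 \<le> cos (1::real)"
proof -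
  have "cos (pi / 3) \<le> cos 1" using pi_gt3 by (intro cos_monotone_0_pi_le) auto
  then show ?thesis by (simp add: cos_60)
qed

lemma trig_facts:
  assumes p: "0 < p" "p < (1::real)"
  shows "cos 1 \<le> cos p" "cos p \<le> 1" "0 < cos p" "0 < sin p" "sin p \<le> p"
    "1 - cos p \<le> p" "tan p \<le> p / cos 1" "1/2 \<le> cot p" "1 / cot p = tan p"
proof -
  show c1: "cos 1 \<le> cos p" using p pi_gt3 by (intro cos_monotone_0_pi_le) auto
  show "cos p \<le> 1" by simp
  show cp: "0 < cos p" "0 < sin p" using sin_cos_pos[OF p] by auto
  show sp: "sin p \<le> p" using p by (intro sin_x_le_x) auto
  have c10: "0 < cos (1::real)" using cos1_ge by linarith
  have "norm (cos p - cos 0) \<le> 1 * \<bar>p - 0\<bar>"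
    by (rule mvt_vec[of UNIV cos "\<lambda>x. - sin x"])
       (auto simp: has_real_derivative_iff_has_vector_derivative[symmetric] intro!: derivative_eq_intros)
  then show "1 - cos p \<le> p" using p by simp
  have "tan p = sin p / cos p" by (simp add: tan_def)
  also have "\<dots> \<le> p / cos 1" using sp c1 cp c10 p by (intro frac_le) auto
  finally show "tan p \<le> p / cos 1" .
  have "1/2 \<le> cos p" using c1 cos1_ge by linarith
  also have "cos p \<le> cos p / sin p"
    using cp sin_le_one[of p] by (simp add: le_divide_eq)
  finally show "1/2 \<le> cot p" by (simp add: cot_def)
  show "1 / cot p = tan p" by (simp add: cot_def tan_def)
qed

lemma wt:
  fixes t y \<sigma> :: real
  assumes "\<sigma> > 0" "\<bar>t\<bar> \<le> \<bar>y\<bar>"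
  shows "1 + \<bar>t\<bar> powr \<sigma> \<le> 2 * (1 + \<bar>y\<bar> ^ nat \<lceil>\<sigma>\<rceil>)"
proof -
  have a: "\<bar>t\<bar> powr \<sigma> \<le> \<bar>y\<bar> powr \<sigma>" using assms by (intro powr_mono2) auto
  have b: "\<bar>y\<bar> powr \<sigma> \<le> 1 + \<bar>y\<bar> ^ nat \<lceil>\<sigma>\<rceil>"
  proof (cases "\<bar>y\<bar> \<le> 1")
    case True
    then have "\<bar>y\<bar> powr \<sigma> \<le> 1" using assms by (simp add: powr_le1)
    then show ?thesis by (smt (verit) zero_le_power abs_ge_zero)
  next
    case False
    then have "\<bar>y\<bar> powr \<sigma> \<le> \<bar>y\<bar> powr real (nat \<lceil>\<sigma>\<rceil>)"
      using assms by (intro powr_mono) auto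
    also have "\<dots> = \<bar>y\<bar> ^ nat \<lceil>\<sigma>\<rceil>" using False by (simp add: powr_realpow)
    finally show ?thesis by simp
  qed
  show ?thesis using a b by (smt (verit) zero_le_power abs_ge_zero)
qed

lemma sch_w:
  assumes "schwartz h"
  shows "\<exists>Q. \<forall>y. \<bar>y\<bar> ^ m * (1 + \<bar>y\<bar> ^ k) * \<bar>(deriv ^^ n) h y\<bar> \<le> Q"
proof -
  obtain Q1 where Q1: "\<forall>y. \<bar>y ^ m * (deriv ^^ n) h y\<bar> \<le> Q1" using sch_bnd[OF assms] by blast
  obtain Q2 where Q2: "\<forall>y. \<bar>y ^ (m + k) * (deriv ^^ n) h y\<bar> \<le> Q2" using sch_bnd[OF assms] by blast
  show ?thesis
  proof (intro exI allI)
    fix y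
    have "\<bar>y\<bar> ^ m * (1 + \<bar>y\<bar> ^ k) * \<bar>(deriv ^^ n) h y\<bar> = \<bar>y ^ m * (deriv ^^ n) h y\<bar> + \<bar>y ^ (m + k) * (deriv ^^ n) h y\<bar>"
      by (simp add: algebra_simps abs_mult power_abs power_add)
    also have "\<dots> \<le> Q1 + Q2" using Q1 Q2 by (intro add_mono) auto
    finally show "\<bar>y\<bar> ^ m * (1 + \<bar>y\<bar> ^ k) * \<bar>(deriv ^^ n) h y\<bar> \<le> Q1 + Q2" .
  qed
qed

lemma e2pi_neg: "e2pi (- x) = cnj (e2pi x)"
  unfolding e2pi_def by (simp add: exp_cnj)

lemma frft_neg:
  assumes p: "0 < p" "p < 1"
  shows "frft f (- p) t = cnj (frft f p t)"
proof -
  have n2: "\<not> (\<exists>k::int. p = pi * of_int k)" by (rule pos_not_mult_pi[OF p])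
  have n2': "\<not> (\<exists>k::int. - p = pi * of_int k)"
  proof
    assume "\<exists>k::int. - p = pi * of_int k"
    then obtain k :: int where "- p = pi * of_int k" by blast
    then have "p = pi * of_int (- k)" by simp
    then show False using n2 by blast
  qed
  have n1: "\<not> (\<exists>k::int. p = 2 * pi * of_int k)"
  proof
    assume "\<exists>k::int. p = 2 * pi * of_int k"
    then obtain k :: int where "p = 2 * pi * of_int k" by blast
    then have "p = pi * of_int (2 * k)" by simp
    then show False using n2 by blast
  qed
  have n1': "\<not> (\<exists>k::int. - p = 2 * pi * of_int k)"
  proof
    assume "\<exists>k::int. - p = 2 * pi * of_int k"
    then obtain k :: int where "- p = 2 * pi * of_int k" by blast
    then have "p = pi * of_int (- 2 * k)" by simp
    then show False using n2 by blast
  qed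
  have fl: "\<lfloor>p / pi\<rfloor> = 0" using p pi_gt3 by (intro floor_unique) (auto simp: field_simps)
  have fl': "\<lfloor>- p / pi\<rfloor> = -1" using p pi_gt3 by (intro floor_unique) (auto simp: field_simps)
  have sig: "sigma_phase p = 1" "sigma_phase (- p) = -1" unfolding sigma_phase_def fl fl' by simp_all
  define P where "P w = ((1/2) * (t\<^sup>2 + w\<^sup>2) * cos p - t * w) / sin p" for w
  define I where "I = (LINT w|lborel. e2pi (P w) * of_real (f w))"
  have ph: "e2pi (((1/2) * (t\<^sup>2 + w\<^sup>2) * cos (- p) - t * w) / sin (- p)) * of_real (f w)
      = cnj (e2pi (P w) * of_real (f w))" for w
  proof -
    have "((1/2) * (t\<^sup>2 + w\<^sup>2) * cos (- p) - t * w) / sin (- p) = - P w" unfolding P_def by simp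
    then show ?thesis by (simp add: e2pi_neg)
  qed
  have A: "frft f (- p) t = e2pi (- sigma_phase (- p) / 8) * of_real (\<bar>sin (- p)\<bar> powr (-1/2)) *
      (LINT w|lborel. cnj (e2pi (P w) * of_real (f w)))"
    unfolding frft_def using n1' n2' by (simp only: if_False ph)
  have B: "frft f p t = e2pi (- sigma_phase p / 8) * of_real (\<bar>sin p\<bar> powr (-1/2)) * I"
    unfolding frft_def I_def P_def using n1 n2 by (simp only: if_False)
  have C: "e2pi (- sigma_phase (- p) / 8) = cnj (e2pi (- sigma_phase p / 8))"
    unfolding sig by (simp add: e2pi_neg[symmetric])
  have "frft f (- p) t = cnj (e2pi (- sigma_phase p / 8)) * of_real (\<bar>sin p\<bar> powr (-1/2)) * cnj I"
  proof -
    have "(LINT w|lborel. cnj (e2pi (P w) * of_real (f w))) = cnj I"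
      unfolding I_def by (rule Bochner_Integration.integral_cnj)
    then show ?thesis unfolding A C by simp
  qed
  also have "\<dots> = cnj (frft f p t)" unfolding B by simp
  finally show ?thesis .
qed


lemma pos_bound:
  assumes f: "schwartz f" and \<sigma>: "\<sigma> > 0"
  shows "\<exists>C. \<forall>p t. 0 < p \<longrightarrow> p < 1 \<longrightarrow> cmod (frft f p t - of_real (f t)) * (1 + \<bar>t\<bar> powr \<sigma>) \<le> C * p"
proof -
  define k where "k = nat \<lceil>\<sigma>\<rceil>"
  define c1 where "c1 = cos (1::real)"
  have c1: "1/2 \<le> c1" unfolding c1_def by (rule cos1_ge)
  obtain C0 where C0: "\<And>l x. l \<ge> 1/2 \<Longrightarrow> \<bar>x\<bar> ^ 0 * cmod (Hs (sp l 1) f x - of_real (f x)) \<le> C0 / l"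
    using DEC[of 0] f by blast
  obtain Ck where Ck: "\<And>l x. l \<ge> 1/2 \<Longrightarrow> \<bar>x\<bar> ^ k * cmod (Hs (sp l 1) f x - of_real (f x)) \<le> Ck / l"
    using DEC[of k] f by blast
  obtain Q0 where Q0: "\<And>y. \<bar>y\<bar> ^ 0 * (1 + \<bar>y\<bar> ^ k) * \<bar>(deriv ^^ 0) f y\<bar> \<le> Q0" using sch_w[OF f] by blast
  obtain Q2 where Q2: "\<And>y. \<bar>y\<bar> ^ 2 * (1 + \<bar>y\<bar> ^ k) * \<bar>(deriv ^^ 0) f y\<bar> \<le> Q2" using sch_w[OF f] by blast
  obtain Q1 where Q1: "\<And>y. \<bar>y\<bar> ^ 1 * (1 + \<bar>y\<bar> ^ k) * \<bar>(deriv ^^ 1) f y\<bar> \<le> Q1" using sch_w[OF f] by blast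
  define K where "K = 2 * (\<bar>C0\<bar> + \<bar>Ck\<bar>) / c1 / c1 + 2 * Q0 / c1 + 2 * pi * Q2 / c1 + 2 * Q1 / c1"
  show ?thesis
  proof (intro exI allI impI)
    fix p t :: real assume p: "0 < p" "p < 1"
    note tf = trig_facts[OF p]
    define c where "c = cos p"
    define l where "l = cot p"
    define x where "x = t / c"
    define a where "a = c powr (-1/2)"
    define \<theta> where "\<theta> = pi * t\<^sup>2 * tan p"
    define E where "E = exp (- \<i> * of_real \<theta>)"
    define H where "H = Hs (sp l 1) f x"
    define W where "W = 1 + \<bar>t\<bar> powr \<sigma>"
    have c0: "0 < c" "c \<le> 1" "c1 \<le> c" "1 - c \<le> p" using tf unfolding c_def c1_def by auto
    have c1p: "0 < c1" using c1 by simp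
    have l: "1/2 \<le> l" "1 / l = tan p" using tf unfolding l_def by auto
    have tanp: "tan p \<le> p / c1" using tf unfolding c1_def by auto
    have tan0: "0 \<le> tan p" using tf l by (simp add: tan_def)
    have W0: "0 < W" unfolding W_def by (simp add: add_pos_nonneg)
    have tx: "\<bar>t\<bar> \<le> \<bar>x\<bar>" unfolding x_def using c0 by (simp add: abs_divide le_divide_eq mult_left_le)
    have Wx: "W \<le> 2 * (1 + \<bar>x\<bar> ^ k)" unfolding W_def k_def by (rule wt[OF \<sigma> tx])
    have aeq: "a = 1 / sqrt c" unfolding a_def using c0 by (simp add: powr_minus_divide powr_half_sqrt)
    have sc: "c \<le> sqrt c" using c0 by (simp add: real_le_rsqrt power2_eq_square mult_le_cancel_left1)
    have a1: "1 \<le> a" unfolding aeq using c0 by (simp add: real_sqrt_le_1_iff)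
    have a2: "a \<le> 1 / c" unfolding aeq using c0 sc by (simp add: frac_le)
    have aa: "a - 1 \<le> p / c1"
    proof -
      have "a * a = 1 / c" unfolding aeq using c0 by simp
      moreover have "a * 1 \<le> a * a" using a1 by (intro mult_left_mono) auto
      ultimately have "a - 1 \<le> 1 / c - 1" by linarith
      also have "1 / c - 1 = (1 - c) / c" using c0 by (simp add: field_simps)
      also have "\<dots> \<le> p / c1" using c0 c1p p by (intro frac_le) auto
      finally show ?thesis .
    qed
    have E1: "cmod E = 1" unfolding E_def by (simp add: norm_exp_eq_Re)
    have Em1: "cmod (E - 1) \<le> pi * t\<^sup>2 * (p / c1)"
    proof -
      have "cmod (E - 1) = 2 * \<bar>sin (- \<theta> / 2)\<bar>" unfolding E_def using dist_exp_i_1[of "- \<theta>"] by simp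
      also have "\<dots> \<le> 2 * \<bar>- \<theta> / 2\<bar>" using abs_sin_x_le_abs_x[of "- \<theta> / 2"] by simp
      also have "\<dots> = pi * t\<^sup>2 * tan p" unfolding \<theta>_def using tan0 by (simp add: abs_mult)
      also have "\<dots> \<le> pi * t\<^sup>2 * (p / c1)" using tanp by (intro mult_left_mono) auto
      finally show ?thesis .
    qed
    have fr: "frft f p t = of_real a * E * H"
      unfolding frft_pos[OF p] a_def E_def H_def \<theta>_def l_def x_def c_def by simp
    have dec: "of_real a * E * H - of_real (f t) =
        of_real a * E * (H - of_real (f x)) + (of_real a * E - 1) * of_real (f x) + of_real (f x - f t)"
      by (simp add: algebra_simps)
    have T1: "cmod (of_real a * E * (H - of_real (f x))) * W \<le> 2 * (\<bar>C0\<bar> + \<bar>Ck\<bar>) / c1 / c1 * p"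
    proof -
      have "cmod (H - of_real (f x)) * W \<le> cmod (H - of_real (f x)) * (2 * (1 + \<bar>x\<bar> ^ k))"
        using Wx by (intro mult_left_mono) auto
      also have "\<dots> = 2 * (\<bar>x\<bar> ^ 0 * cmod (H - of_real (f x)) + \<bar>x\<bar> ^ k * cmod (H - of_real (f x)))"
        by (simp add: algebra_simps)
      also have "\<dots> \<le> 2 * (C0 / l + Ck / l)"
        unfolding H_def using C0[OF l(1)] Ck[OF l(1)] by (intro mult_left_mono add_mono) auto
      also have "\<dots> \<le> 2 * ((\<bar>C0\<bar> + \<bar>Ck\<bar>) * (1 / l))"
      proof -
        have l0: "0 < 1 / l" using l(1) by simp
        have "C0 / l + Ck / l = (C0 + Ck) * (1 / l)" by (simp add: divide_inverse distrib_right)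
        also have "\<dots> \<le> (\<bar>C0\<bar> + \<bar>Ck\<bar>) * (1 / l)" using l0 by (intro mult_right_mono) auto
        finally show ?thesis by (intro mult_left_mono) auto
      qed
      also have "\<dots> \<le> 2 * ((\<bar>C0\<bar> + \<bar>Ck\<bar>) * (p / c1))"
        unfolding l(2) using tanp by (intro mult_left_mono) auto
      finally have h: "cmod (H - of_real (f x)) * W \<le> 2 * ((\<bar>C0\<bar> + \<bar>Ck\<bar>) * (p / c1))" .
      have "cmod (of_real a * E * (H - of_real (f x))) * W = a * (cmod (H - of_real (f x)) * W)"
        using a1 E1 by (simp add: norm_mult)
      also have "\<dots> \<le> (1 / c1) * (2 * ((\<bar>C0\<bar> + \<bar>Ck\<bar>) * (p / c1)))"
      proof (rule mult_mono)
        have "1 / c \<le> 1 / c1" using c0 c1p by (intro divide_left_mono) auto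
        then show "a \<le> 1 / c1" using a2 by linarith
      qed (use h a1 c1p W0 in auto)
      also have "\<dots> = 2 * (\<bar>C0\<bar> + \<bar>Ck\<bar>) / c1 / c1 * p" by (simp add: field_simps)
      finally show ?thesis .
    qed
    have fxW: "\<bar>f x\<bar> * W \<le> 2 * Q0"
    proof -
      have "\<bar>f x\<bar> * W \<le> \<bar>f x\<bar> * (2 * (1 + \<bar>x\<bar> ^ k))" using Wx by (intro mult_left_mono) auto
      also have "\<dots> = 2 * (\<bar>x\<bar> ^ 0 * (1 + \<bar>x\<bar> ^ k) * \<bar>(deriv ^^ 0) f x\<bar>)" by (simp only: funpow_0 power_0 mult_1 mult_ac)
      also have "\<dots> \<le> 2 * Q0" using Q0[of x] by linarith
      finally show ?thesis .
    qed
    have fxW2: "t\<^sup>2 * \<bar>f x\<bar> * W \<le> 2 * Q2"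
    proof -
      have "t\<^sup>2 \<le> x\<^sup>2" using tx by (simp add: abs_le_square_iff)
      then have "t\<^sup>2 * \<bar>f x\<bar> * W \<le> x\<^sup>2 * \<bar>f x\<bar> * (2 * (1 + \<bar>x\<bar> ^ k))"
        using Wx W0 by (intro mult_mono) (auto intro: mult_right_mono)
      also have "\<dots> = 2 * (\<bar>x\<bar> ^ 2 * (1 + \<bar>x\<bar> ^ k) * \<bar>(deriv ^^ 0) f x\<bar>)" by (simp add: power2_abs)
      also have "\<dots> \<le> 2 * Q2" using Q2[of x] by simp
      finally show ?thesis .
    qed
    have T2: "cmod ((of_real a * E - 1) * of_real (f x)) * W \<le> (2 * Q0 / c1 + 2 * pi * Q2 / c1) * p"
    proof -
      have "of_real a * E - 1 = (of_real a - 1) * E + (E - 1)" by (simp add: algebra_simps)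
      then have "cmod (of_real a * E - 1) \<le> cmod ((of_real a - 1) * E) + cmod (E - 1)"
        by (subst \<open>of_real a * E - 1 = (of_real a - 1) * E + (E - 1)\<close>) (rule norm_triangle_ineq)
      also have "cmod ((of_real a - 1) * E) = a - 1"
      proof -
        have "(of_real a - 1 :: complex) = of_real (a - 1)" by simp
        then show ?thesis using a1 E1 by (simp only: norm_mult norm_of_real) simp
      qed
      finally have "cmod (of_real a * E - 1) \<le> p / c1 + pi * t\<^sup>2 * (p / c1)" using aa Em1 by linarith
      then have "cmod (of_real a * E - 1) * (\<bar>f x\<bar> * W) \<le> (p / c1 + pi * t\<^sup>2 * (p / c1)) * (\<bar>f x\<bar> * W)"
        using W0 by (intro mult_right_mono) auto
      moreover have "cmod ((of_real a * E - 1) * of_real (f x)) * W = cmod (of_real a * E - 1) * (\<bar>f x\<bar> * W)"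
        by (simp add: norm_mult)
      ultimately have "cmod ((of_real a * E - 1) * of_real (f x)) * W \<le> (p / c1 + pi * t\<^sup>2 * (p / c1)) * (\<bar>f x\<bar> * W)"
        by linarith
      also have "\<dots> = (p / c1) * (\<bar>f x\<bar> * W) + (pi * (p / c1)) * (t\<^sup>2 * \<bar>f x\<bar> * W)" by (simp add: algebra_simps)
      also have "\<dots> \<le> (p / c1) * (2 * Q0) + (pi * (p / c1)) * (2 * Q2)"
        using fxW fxW2 p c1p by (intro add_mono mult_left_mono) auto
      also have "\<dots> = (2 * Q0 / c1 + 2 * pi * Q2 / c1) * p" by (simp add: field_simps)
      finally show ?thesis .
    qed
    have T3: "cmod (of_real (f x - f t) :: complex) * W \<le> 2 * Q1 / c1 * p"
    proof (cases "t = 0")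
      case True
      have "0 \<le> Q1" using Q1[of 0] by simp
      then have "0 \<le> 2 * Q1 / c1 * p" using c1p p by (intro mult_nonneg_nonneg divide_nonneg_pos) auto
      then show ?thesis using True by (simp add: x_def)
    next
      case False
      let ?S = "{min t x .. max t x}"
      have sS: "\<bar>t\<bar> \<le> \<bar>\<xi>\<bar>" if "\<xi> \<in> ?S" for \<xi>
      proof (cases "0 \<le> t")
        case True
        then have "t \<le> x" unfolding x_def using c0 by (simp add: le_divide_eq mult_left_le)
        then show ?thesis using that True by auto
      next
        case False
        then have "x \<le> t" unfolding x_def using c0 by (simp add: divide_le_eq mult_le_cancel_left1)
        then show ?thesis using that False by auto
      qed
      have tW: "0 < \<bar>t\<bar> * W" using False W0 by simp
      have bd: "\<bar>deriv f \<xi>\<bar> \<le> 2 * Q1 / (\<bar>t\<bar> * W)" if "\<xi> \<in> ?S" for \<xi>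
      proof -
        have "\<bar>deriv f \<xi>\<bar> * (\<bar>t\<bar> * W) \<le> \<bar>deriv f \<xi>\<bar> * (\<bar>\<xi>\<bar> * (2 * (1 + \<bar>\<xi>\<bar> ^ k)))"
          using sS[OF that] wt[OF \<sigma> sS[OF that]] W0 unfolding W_def k_def
          by (intro mult_left_mono mult_mono) auto
        also have "\<dots> = 2 * (\<bar>\<xi>\<bar> ^ 1 * (1 + \<bar>\<xi>\<bar> ^ k) * \<bar>(deriv ^^ 1) f \<xi>\<bar>)" by simp
        also have "\<dots> \<le> 2 * Q1" using Q1[of \<xi>] by simp
        finally show ?thesis using tW by (simp add: le_divide_eq)
      qed
      have mv: "norm (f x - f t) \<le> (2 * Q1 / (\<bar>t\<bar> * W)) * \<bar>x - t\<bar>"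
      proof (rule mvt_vec[of ?S f "deriv f"])
        show "(f has_vector_derivative deriv f \<xi>) (at \<xi> within ?S)" for \<xi>
          using sch_der[OF f, of 0 \<xi>]
          by (simp add: has_real_derivative_iff_has_vector_derivative[symmetric] has_field_derivative_at_within)
      qed (use bd in auto)
      have xt: "\<bar>x - t\<bar> \<le> \<bar>t\<bar> * (p / c1)"
      proof -
        have "x - t = t * ((1 - c) / c)" unfolding x_def using c0 by (simp add: field_simps)
        then have "\<bar>x - t\<bar> = \<bar>t\<bar> * ((1 - c) / c)" using c0 by (simp add: abs_mult)
        also have "\<dots> \<le> \<bar>t\<bar> * (p / c1)" using c0 c1p p by (intro mult_left_mono frac_le) auto
        finally show ?thesis .
      qed
      have "\<bar>f x - f t\<bar> \<le> (2 * Q1 / (\<bar>t\<bar> * W)) * (\<bar>t\<bar> * (p / c1))"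
      proof -
        have "\<bar>deriv f t\<bar> \<le> 2 * Q1 / (\<bar>t\<bar> * W)" by (rule bd) simp
        then have B0: "0 \<le> 2 * Q1 / (\<bar>t\<bar> * W)" by (meson abs_ge_zero order_trans)
        have "(2 * Q1 / (\<bar>t\<bar> * W)) * \<bar>x - t\<bar> \<le> (2 * Q1 / (\<bar>t\<bar> * W)) * (\<bar>t\<bar> * (p / c1))"
          by (rule mult_left_mono[OF xt B0])
        then show ?thesis using mv by simp
      qed
      then have "\<bar>f x - f t\<bar> * W \<le> (2 * Q1 / (\<bar>t\<bar> * W)) * (\<bar>t\<bar> * (p / c1)) * W"
        by (rule mult_right_mono) (use W0 in auto)
      also have "\<dots> = 2 * Q1 / c1 * p" using tW W0 False by (simp add: field_simps)
      finally show ?thesis by (simp only: norm_of_real real_norm_def)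
    qed
    have "cmod (frft f p t - of_real (f t)) * W \<le>
        (cmod (of_real a * E * (H - of_real (f x))) + cmod ((of_real a * E - 1) * of_real (f x)) + cmod (of_real (f x - f t) :: complex)) * W"
      unfolding fr dec using W0 by (intro mult_right_mono norm_triangle_le add_mono norm_triangle_ineq order_refl) auto
    also have "\<dots> \<le> 2 * (\<bar>C0\<bar> + \<bar>Ck\<bar>) / c1 / c1 * p + (2 * Q0 / c1 + 2 * pi * Q2 / c1) * p + 2 * Q1 / c1 * p"
      using T1 T2 T3 by (simp add: distrib_right)
    also have "\<dots> = K * p" unfolding K_def by (simp add: algebra_simps)
    finally show "cmod (frft f p t - of_real (f t)) * (1 + \<bar>t\<bar> powr \<sigma>) \<le> K * p" unfolding W_def .
  qed
qed


theorem lemma2p6: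
  fixes f :: "real \<Rightarrow> real" and \<sigma> :: real
  assumes "schwartz f" and "\<sigma> > 0"
  shows "\<exists>C. \<forall>\<phi> t. \<bar>\<phi>\<bar> < 1 \<longrightarrow>
           cmod (frft f \<phi> t - complex_of_real (f t)) \<le> C * \<bar>\<phi>\<bar> / (1 + \<bar>t\<bar> powr \<sigma>)"
proof -
  obtain K where K: "\<And>p t. 0 < p \<Longrightarrow> p < 1 \<Longrightarrow> cmod (frft f p t - of_real (f t)) * (1 + \<bar>t\<bar> powr \<sigma>) \<le> K * p"
    using pos_bound[OF assms] by blast
  show ?thesis
  proof (intro exI allI impI)
    fix \<phi> t :: real assume ph: "\<bar>\<phi>\<bar> < 1"
    have W0: "0 < 1 + \<bar>t\<bar> powr \<sigma>" by (simp add: add_pos_nonneg)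
    have key: "cmod (frft f \<phi> t - of_real (f t)) * (1 + \<bar>t\<bar> powr \<sigma>) \<le> K * \<bar>\<phi>\<bar>"
    proof (cases "\<phi> = 0")
      case True
      have "frft f \<phi> t = of_real (f t)" unfolding frft_def True by (auto intro: exI[of _ 0])
      then show ?thesis using True by simp
    next
      case False
      show ?thesis
      proof (cases "0 < \<phi>")
        case True then show ?thesis using K[of \<phi> t] ph by simp
      next
        case nn: False
        then have p: "0 < - \<phi>" "- \<phi> < 1" using False ph by auto
        have "frft f \<phi> t = cnj (frft f (- \<phi>) t)" using frft_neg[OF p, of f t] by simp
        then have "cmod (frft f \<phi> t - of_real (f t)) = cmod (frft f (- \<phi>) t - of_real (f t))"
          by (metis complex_cnj_complex_of_real complex_cnj_diff complex_mod_cnj)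
        then show ?thesis using K[OF p, of t] nn by simp
      qed
    qed
    then show "cmod (frft f \<phi> t - of_real (f t)) \<le> K * \<bar>\<phi>\<bar> / (1 + \<bar>t\<bar> powr \<sigma>)"
      using W0 by (simp add: le_divide_eq)
  qed
qed

end
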